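(* Every cocompact Fuchsian group is extraterrestrial.
   Context: A Fuchsian group is a discrete subgroup of $\mathrm{PSL}(2,\mathbb R)$, acting on the hyperbolic plane by Möbius transformations; it is cocompact if the quotient of the hyperbolic plane by this action is compact. A finitely generated group is extraterrestrial if its Cayley graph with respect to some (equivalently any) finite symmetric generating set is extraterrestrial, where a graph $G=(V,E)$ is extraterrestrial if for every $m$ there is $k$ such that for every $r$ there is a triple $(U,F,O)$ of pairwise disjoint finite vertex sets with $U\neq\emptyset$, $|U|\ge m|F|$, a bijection $\mu:U\to O$ with $d_G(u,\mu(u))\le k$, and every path from $U$ to $O$ either contains a vertex of $F$ or has length at least $r$. *)

theory Defs
  imports "HOL-Analysis.Analysis" "HOL-Algebra.Generated_Groups" "HOL-Library.Extended_Nat"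
begin

text \<open>A walk is a nonempty list of vertices, consecutive ones adjacent; its length is
  the number of edges, i.e. length p - 1.\<close>
definition walk :: "'a set \<Rightarrow> ('a \<Rightarrow> 'a \<Rightarrow> bool) \<Rightarrow> 'a list \<Rightarrow> bool" where
  "walk V E p \<longleftrightarrow> p \<noteq> [] \<and> set p \<subseteq> V \<and> (\<forall>i. Suc i < length p \<longrightarrow> E (p ! i) (p ! Suc i))"

text \<open>Graph distance (infinite if no path exists).\<close>
definition gdist :: "'a set \<Rightarrow> ('a \<Rightarrow> 'a \<Rightarrow> bool) \<Rightarrow> 'a \<Rightarrow> 'a \<Rightarrow> enat" where
  "gdist V E u v = (INF p \<in> {p. walk V E p \<and> hd p = u \<and> last p = v}. enat (length p - 1))"

definition extraterrestrial_graph :: "'a set \<Rightarrow> ('a \<Rightarrow> 'a \<Rightarrow> bool) \<Rightarrow> bool" where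
  "extraterrestrial_graph V E \<longleftrightarrow>
    (\<forall>m::nat. \<exists>k::nat. \<forall>r::nat. \<exists>U F Ou (\<mu> :: 'a \<Rightarrow> 'a).
       U \<subseteq> V \<and> F \<subseteq> V \<and> Ou \<subseteq> V \<and> finite U \<and> finite F \<and> finite Ou \<and>
       U \<inter> F = {} \<and> U \<inter> Ou = {} \<and> F \<inter> Ou = {} \<and>
       U \<noteq> {} \<and> card U \<ge> m * card F \<and>
       bij_betw \<mu> U Ou \<and> (\<forall>u\<in>U. gdist V E u (\<mu> u) \<le> enat k) \<and>
       (\<forall>p. walk V E p \<and> hd p \<in> U \<and> last p \<in> Ou \<longrightarrow>
             set p \<inter> F \<noteq> {} \<or> length p - 1 \<ge> r))"

definition cayley_adj :: "('g, 'b) monoid_scheme \<Rightarrow> 'g set \<Rightarrow> 'g \<Rightarrow> 'g \<Rightarrow> bool" where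
  "cayley_adj G S g h \<longleftrightarrow> g \<in> carrier G \<and> h \<in> carrier G \<and>
     (\<exists>s\<in>S. h = g \<otimes>\<^bsub>G\<^esub> s \<or> g = h \<otimes>\<^bsub>G\<^esub> s)"

definition extraterrestrial_group :: "('g, 'b) monoid_scheme \<Rightarrow> bool" where
  "extraterrestrial_group G \<longleftrightarrow>
    (\<exists>S. finite S \<and> S \<subseteq> carrier G \<and> (\<forall>s\<in>S. inv\<^bsub>G\<^esub> s \<in> S) \<and>
         generate G S = carrier G \<and>
         extraterrestrial_graph (carrier G) (cayley_adj G S))"

definition upper_half_plane :: "complex set" where
  "upper_half_plane = {z. Im z > 0}"

text \<open>Moebius transformation of a real 2x2 matrix, as a map on the upper half plane
  (extended by the identity outside it, so that composition is the group law).\<close>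
definition mob :: "real^2^2 \<Rightarrow> complex \<Rightarrow> complex" where
  "mob A z = (if Im z > 0
      then (of_real (A$1$1) * z + of_real (A$1$2)) / (of_real (A$2$1) * z + of_real (A$2$2))
      else z)"

definition PSL2R :: "(complex \<Rightarrow> complex) set" where
  "PSL2R = {mob A | A. det A = 1}"

definition psl_group :: "(complex \<Rightarrow> complex) monoid" where
  "psl_group = \<lparr>carrier = PSL2R, monoid.mult = (\<circ>), one = id\<rparr>"

text \<open>Discreteness in the quotient topology of PSL(2,R) = SL(2,R)/{+-I}.\<close>
definition discrete_in_PSL :: "(complex \<Rightarrow> complex) set \<Rightarrow> bool" where
  "discrete_in_PSL \<Gamma> \<longleftrightarrow>
    (\<forall>A. det A = 1 \<and> mob A \<in> \<Gamma> \<longrightarrow>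
       (\<exists>e>0. \<forall>B. det B = 1 \<and> mob B \<in> \<Gamma> \<and> norm (B - A) < e \<longrightarrow> mob B = mob A))"

definition fuchsian :: "(complex \<Rightarrow> complex) set \<Rightarrow> bool" where
  "fuchsian \<Gamma> \<longleftrightarrow> subgroup \<Gamma> psl_group \<and> discrete_in_PSL \<Gamma>"

definition quotient_topology :: "'a topology \<Rightarrow> ('a \<Rightarrow> 'b) \<Rightarrow> 'b topology" where
  "quotient_topology X f =
     topology (\<lambda>U. U \<subseteq> f ` topspace X \<and> openin X (topspace X \<inter> f -` U))"

lemma istopology_quotient:
  "istopology (\<lambda>U. U \<subseteq> f ` topspace X \<and> openin X (topspace X \<inter> f -` U))"
proof -
  have 1: "openin X (topspace X \<inter> f -` (S \<inter> T))"
    if "openin X (topspace X \<inter> f -` S)" "openin X (topspace X \<inter> f -` T)" for S T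
  proof -
    have "topspace X \<inter> f -` (S \<inter> T) = (topspace X \<inter> f -` S) \<inter> (topspace X \<inter> f -` T)" by auto
    then show ?thesis using that by auto
  qed
  have 2: "openin X (topspace X \<inter> f -` \<Union>K)"
    if "\<forall>S\<in>K. openin X (topspace X \<inter> f -` S)" for K
  proof -
    have "topspace X \<inter> f -` \<Union>K = (\<Union>S\<in>K. topspace X \<inter> f -` S)" by auto
    moreover have "openin X (\<Union>S\<in>K. topspace X \<inter> f -` S)" using that by (intro openin_Union) auto
    ultimately show ?thesis by simp
  qed
  show ?thesis unfolding istopology_def using 1 2 by blast
qed

definition orbit :: "(complex \<Rightarrow> complex) set \<Rightarrow> complex \<Rightarrow> complex set" where
  "orbit \<Gamma> z = (\<lambda>g. g z) ` \<Gamma>"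

definition cocompact :: "(complex \<Rightarrow> complex) set \<Rightarrow> bool" where
  "cocompact \<Gamma> \<longleftrightarrow>
     compact_space (quotient_topology (subtopology euclidean upper_half_plane) (orbit \<Gamma>))"

end

theory Submission
  imports Defs
begin

definition cd :: "complex \<Rightarrow> complex \<Rightarrow> real" where
  "cd z w = 1 + (cmod (z - w))^2 / (2 * Im z * Im w)"

definition hdist :: "complex \<Rightarrow> complex \<Rightarrow> real" where
  "hdist z w = arcosh (cd z w)"

lemma cd_ge1: "Im z > 0 \<Longrightarrow> Im w > 0 \<Longrightarrow> cd z w \<ge> 1"
  unfolding cd_def by (simp add: zero_le_divide_iff)

lemma cd_sym: "cd z w = cd w z"
  unfolding cd_def by (simp add: norm_minus_commute mult.commute mult.left_commute)

lemma hd_sym: "hdist z w = hdist w z"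
  unfolding hdist_def by (simp add: cd_sym)

lemma cd_refl: "cd z z = 1" unfolding cd_def by simp
lemma hd_refl: "hdist z z = 0" unfolding hdist_def by (simp add: cd_refl)

lemma hd_nonneg: "Im z > 0 \<Longrightarrow> Im w > 0 \<Longrightarrow> hdist z w \<ge> 0"
  unfolding hdist_def using cd_ge1 by simp

lemma cosh_hd: "Im z > 0 \<Longrightarrow> Im w > 0 \<Longrightarrow> cosh (hdist z w) = cd z w"
  unfolding hdist_def using cd_ge1 by simp

lemma hd_le_iff: "Im z > 0 \<Longrightarrow> Im w > 0 \<Longrightarrow> R \<ge> 0 \<Longrightarrow> hdist z w \<le> R \<longleftrightarrow> cd z w \<le> cosh R"
  by (metis cosh_hd cosh_real_nonneg_le_iff hd_nonneg)

lemma hd_less_iff: "Im z > 0 \<Longrightarrow> Im w > 0 \<Longrightarrow> R \<ge> 0 \<Longrightarrow> hdist z w < R \<longleftrightarrow> cd z w < cosh R"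
  by (metis cosh_hd cosh_real_nonneg_less_iff hd_nonneg)

lemma cd_alt: "Im z > 0 \<Longrightarrow> Im w > 0 \<Longrightarrow>
  cd z w = ((Re z)^2 + (Im z)^2 + (Re w)^2 + (Im w)^2 - 2 * Re z * Re w) / (2 * Im z * Im w)"
  unfolding cd_def cmod_power2 by (simp add: field_simps power2_eq_square)

definition P0 :: "complex \<Rightarrow> real" where "P0 z = ((Re z)^2 + (Im z)^2 + 1) / (2 * Im z)"
definition P1 :: "complex \<Rightarrow> real" where "P1 z = ((Re z)^2 + (Im z)^2 - 1) / (2 * Im z)"
definition P2 :: "complex \<Rightarrow> real" where "P2 z = Re z / Im z"

lemma mink: "Im z > 0 \<Longrightarrow> Im w > 0 \<Longrightarrow> cd z w = P0 z * P0 w - P1 z * P1 w - P2 z * P2 w"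
  unfolding cd_alt P0_def P1_def P2_def by (simp add: field_simps power2_eq_square)

lemma gram:
  fixes u0 u1 u2 v0 v1 v2 w0 w1 w2 :: real
  shows "(u0 * u0-u1 * u1-u2 * u2) * (v0 * v0-v1 * v1-v2 * v2) * (w0 * w0-w1 * w1-w2 * w2)
     + 2 * (u0 * v0-u1 * v1-u2 * v2) * (v0 * w0-v1 * w1-v2 * w2) * (u0 * w0-u1 * w1-u2 * w2)
     - (u0 * u0-u1 * u1-u2 * u2) * (v0 * w0-v1 * w1-v2 * w2)^2
     - (v0 * v0-v1 * v1-v2 * v2) * (u0 * w0-u1 * w1-u2 * w2)^2
     - (w0 * w0-w1 * w1-w2 * w2) * (u0 * v0-u1 * v1-u2 * v2)^2
   = (u0 * (v1 * w2-v2 * w1) - u1 * (v0 * w2-v2 * w0) + u2 * (v0 * w1-v1 * w0))^2"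
  by (simp add: power2_eq_square algebra_simps)

lemma gram_ineq:
  assumes "Im x > 0" "Im y > 0" "Im z > 0"
  shows "(cd x z - cd x y * cd y z)^2 \<le> ((cd x y)^2 - 1) * ((cd y z)^2 - 1)"
proof -
  have self: "P0 u * P0 u - P1 u * P1 u - P2 u * P2 u = 1" if "Im u > 0" for u
    using mink[OF that that] cd_refl by simp
  have "0 \<le> (P0 x * (P1 y * P2 z-P2 y * P1 z) - P1 x * (P0 y * P2 z-P2 y * P0 z) + P2 x * (P0 y * P1 z-P1 y * P0 z))^2"
    by simp
  also have "\<dots> = 1 + 2 * cd x y * cd y z * cd x z - (cd y z)^2 - (cd x z)^2 - (cd x y)^2"
    using gram[of "P0 x" "P1 x" "P2 x" "P0 y" "P1 y" "P2 y" "P0 z" "P1 z" "P2 z", symmetric]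
      self[OF assms(1)] self[OF assms(2)] self[OF assms(3)] mink[OF assms(1,2)] mink[OF assms(2,3)] mink[OF assms(1,3)]
    by simp
  finally show ?thesis by (simp add: power2_eq_square algebra_simps)
qed

lemma hd_triangle:
  assumes "Im x > 0" "Im y > 0" "Im z > 0"
  shows "hdist x z \<le> hdist x y + hdist y z"
proof -
  define a where "a = cd x y"
  define b where "b = cd y z"
  define c where "c = cd x z"
  have a1: "a \<ge> 1" "b \<ge> 1" using cd_ge1 assms a_def b_def by auto
  have "(c - a * b)^2 \<le> (a^2-1) * (b^2-1)" using gram_ineq[OF assms] a_def b_def c_def by simp
  hence "c - a * b \<le> sqrt ((a^2-1) * (b^2-1))"
    by (metis real_le_rsqrt abs_le_square_iff abs_ge_self order_trans power2_abs real_sqrt_abs real_sqrt_le_iff)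
  hence "c \<le> a * b + sqrt (a^2-1) * sqrt (b^2-1)" by (simp add: real_sqrt_mult)
  also have "\<dots> = cosh (hdist x y + hdist y z)"
    using a1 by (simp add: cosh_add hdist_def a_def b_def sinh_arcosh_real)
  finally have "cd x z \<le> cosh (hdist x y + hdist y z)" by (simp add: c_def)
  thus ?thesis using hd_le_iff[OF assms(1,3)] hd_nonneg assms by (simp add: add_nonneg_nonneg)
qed

definition mobr :: "real \<Rightarrow> real \<Rightarrow> real \<Rightarrow> real \<Rightarrow> complex \<Rightarrow> complex" where
  "mobr a b c d z = (of_real a * z + of_real b) / (of_real c * z + of_real d)"

lemma denom_nz:
  assumes "a * d - b * c = 1" "Im z > 0"
  shows "of_real c * z + of_real d \<noteq> 0"
proof
  assume h: "of_real c * z + of_real d = 0"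
  hence "Im (of_real c * z + of_real d) = 0" by simp
  hence "c = 0" using assms(2) by simp
  moreover have "Re (of_real c * z + of_real d) = 0" using h by simp
  ultimately have "d = 0" by simp
  with \<open>c = 0\<close> assms(1) show False by simp
qed

lemma Im_mobr:
  assumes "a * d - b * c = 1" "Im z > 0"
  shows "Im (mobr a b c d z) = Im z / (cmod (of_real c * z + of_real d))^2"
proof -
  have cm: "(cmod (of_real c * z + of_real d))^2 = (c * Re z + d)^2 + (c * Im z)^2"
    by (simp add: cmod_power2)
  have "Im (mobr a b c d z) = (a * Im z * (c * Re z + d) - (a * Re z + b) * (c * Im z)) / ((c * Re z + d)^2 + (c * Im z)^2)"
    unfolding mobr_def by (simp add: Im_divide power2_eq_square)
  also have "a * Im z * (c * Re z + d) - (a * Re z + b) * (c * Im z) = Im z * (a * d - b * c)"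
    by (simp add: algebra_simps)
  finally show ?thesis using assms cm by simp
qed

lemma Im_mobr_pos:
  assumes "a * d - b * c = 1" "Im z > 0"
  shows "Im (mobr a b c d z) > 0"
  using Im_mobr[OF assms] denom_nz[OF assms] assms(2) by simp

lemma mobr_diff:
  assumes "a * d - b * c = 1" "Im z > 0" "Im w > 0"
  shows "mobr a b c d z - mobr a b c d w = (z - w) / ((of_real c * z + of_real d) * (of_real c * w + of_real d))"
proof -
  have nz: "of_real c * z + of_real d \<noteq> 0" "of_real c * w + of_real d \<noteq> 0"
    using denom_nz assms by auto
  have e: "(of_real a * of_real d - of_real b * of_real c :: complex) = 1"
    using assms(1) by (metis of_real_1 of_real_diff of_real_mult)
  have "mobr a b c d z - mobr a b c d w =
     ((of_real a * z + of_real b) * (of_real c * w + of_real d) - (of_real a * w + of_real b) * (of_real c * z + of_real d))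
       / ((of_real c * z + of_real d) * (of_real c * w + of_real d))"
    unfolding mobr_def using nz by (simp add: field_simps)
  also have "(of_real a * z + of_real b) * (of_real c * w + of_real d) - (of_real a * w + of_real b) * (of_real c * z + of_real d)
     = (of_real a * of_real d - of_real b * of_real c) * (z - w)"
    by (simp add: algebra_simps)
  finally show ?thesis using e by simp
qed

lemma cd_mobr:
  assumes "a * d - b * c = 1" "Im z > 0" "Im w > 0"
  shows "cd (mobr a b c d z) (mobr a b c d w) = cd z w"
proof -
  define p where "p = cmod (of_real c * z + of_real d)"
  define q where "q = cmod (of_real c * w + of_real d)"
  have pq: "p > 0" "q > 0" using denom_nz assms p_def q_def by auto
  have "(cmod (mobr a b c d z - mobr a b c d w))^2 = (cmod (z - w))^2 / (p^2 * q^2)"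
    unfolding mobr_diff[OF assms] p_def q_def by (simp add: norm_divide norm_mult power_divide power_mult_distrib)
  moreover have "Im (mobr a b c d z) = Im z / p^2" "Im (mobr a b c d w) = Im w / q^2"
    using Im_mobr assms p_def q_def by auto
  ultimately show ?thesis unfolding cd_def using pq assms by (simp only:) (simp add: field_simps)
qed

lemma mobr_comp:
  assumes "a * d - b * c = 1" "e * h - f * g = 1" "Im z > 0"
  shows "mobr a b c d (mobr e f g h z) = mobr (a*e+b*g) (a*f+b*h) (c*e+d*g) (c*f+d*h) z"
proof -
  have nz: "of_real g * z + of_real h \<noteq> 0" using denom_nz assms by auto
  have nz2: "of_real c * mobr e f g h z + of_real d \<noteq> 0"
    using denom_nz[OF assms(1) Im_mobr_pos[OF assms(2,3)]] .
  have nz3: "of_real c * (of_real e * z + of_real f) + of_real d * (of_real g * z + of_real h) \<noteq> 0"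
  proof
    assume "of_real c * (of_real e * z + of_real f) + of_real d * (of_real g * z + of_real h) = 0"
    hence "(of_real c * mobr e f g h z + of_real d) * (of_real g * z + of_real h) = 0"
      unfolding mobr_def using nz by (simp add: field_simps)
    thus False using nz nz2 by simp
  qed
  have frac: "(A * (N / Dn) + B) / (C * (N / Dn) + Dd) = (A * N + B * Dn) / (C * N + Dd * Dn)"
    if "Dn \<noteq> 0" for A B C Dd N Dn :: complex
  proof -
    have "A * (N / Dn) + B = (A * N + B * Dn) / Dn" "C * (N / Dn) + Dd = (C * N + Dd * Dn) / Dn"
      using that by (simp_all add: field_simps)
    thus ?thesis using that by simp
  qed
  show ?thesis unfolding mobr_def
    apply (subst frac[OF nz])
    apply (simp add: algebra_simps)
    done
qed

definition mobf :: "real \<Rightarrow> real \<Rightarrow> real \<Rightarrow> real \<Rightarrow> complex \<Rightarrow> complex" where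
  "mobf a b c d z = (if Im z > 0 then mobr a b c d z else z)"

definition mk :: "real \<Rightarrow> real \<Rightarrow> real \<Rightarrow> real \<Rightarrow> real^2^2" where
  "mk a b c d = vector [vector [a, b], vector [c, d]]"

lemma mk_nth [simp]: "mk a b c d $ 1 $ 1 = a" "mk a b c d $ 1 $ 2 = b" "mk a b c d $ 2 $ 1 = c" "mk a b c d $ 2 $ 2 = d"
  unfolding mk_def by simp_all

lemma det_mk [simp]: "det (mk a b c d) = a * d - b * c"
  by (simp add: det_2)

lemma mob_eq: "mob A = mobf (A$1$1) (A$1$2) (A$2$1) (A$2$2)"
  unfolding mob_def mobf_def mobr_def by (rule ext) simp

lemma mob_mk [simp]: "mob (mk a b c d) = mobf a b c d"
  by (simp add: mob_eq)

lemma det_eq: "det (A::real^2^2) = A$1$1 * A$2$2 - A$1$2 * A$2$1"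
  by (simp add: det_2)

lemma PSL2R_iff: "g \<in> PSL2R \<longleftrightarrow> (\<exists>a b c d. a * d - b * c = 1 \<and> g = mobf a b c d)"
  unfolding PSL2R_def
  apply (auto simp: mob_eq det_eq)
  by (metis det_mk mob_mk mk_nth)

lemma mobf_H: "a * d - b * c = 1 \<Longrightarrow> Im z > 0 \<Longrightarrow> Im (mobf a b c d z) > 0"
  unfolding mobf_def using Im_mobr_pos by auto

lemma mobf_comp:
  assumes "a * d - b * c = 1" "e * h - f * g = 1"
  shows "mobf a b c d \<circ> mobf e f g h = mobf (a*e+b*g) (a*f+b*h) (c*e+d*g) (c*f+d*h)"
    and "(a*e+b*g) * (c*f+d*h) - (a*f+b*h) * (c*e+d*g) = 1"
proof -
  show "(a*e+b*g) * (c*f+d*h) - (a*f+b*h) * (c*e+d*g) = 1"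
  proof -
    have "(a*e+b*g) * (c*f+d*h) - (a*f+b*h) * (c*e+d*g) = (a * d - b * c) * (e * h - f * g)"
      by (simp add: algebra_simps)
    thus ?thesis using assms by simp
  qed
  show "mobf a b c d \<circ> mobf e f g h = mobf (a*e+b*g) (a*f+b*h) (c*e+d*g) (c*f+d*h)"
  proof
    fix z show "(mobf a b c d \<circ> mobf e f g h) z = mobf (a*e+b*g) (a*f+b*h) (c*e+d*g) (c*f+d*h) z"
      using mobr_comp[OF assms] Im_mobr_pos[OF assms(2)] unfolding mobf_def by auto
  qed
qed

lemma mobf_id: "mobf 1 0 0 1 = id"
  unfolding mobf_def mobr_def by (rule ext) simp

lemma mobf_inv:
  assumes "a * d - b * c = 1"
  shows "mobf d (-b) (-c) a \<circ> mobf a b c d = id" "mobf a b c d \<circ> mobf d (-b) (-c) a = id"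
    "d * a - (-b) * (-c) = 1"
proof -
  have d2: "d * a - (-b) * (-c) = 1" using assms by (simp add: algebra_simps)
  show "d * a - (-b) * (-c) = 1" by fact
  have "mobf d (-b) (-c) a \<circ> mobf a b c d = mobf (d*a+(-b)*c) (d*b+(-b)*d) ((-c)*a+a*c) ((-c)*b+a*d)"
    using mobf_comp[OF d2 assms] by simp
  also have "\<dots> = mobf 1 0 0 1" using assms by (simp add: algebra_simps)
  finally show "mobf d (-b) (-c) a \<circ> mobf a b c d = id" by (simp add: mobf_id)
  have "mobf a b c d \<circ> mobf d (-b) (-c) a = mobf (a*d+b*(-c)) (a*(-b)+b*a) (c*d+d*(-c)) (c*(-b)+d*a)"
    using mobf_comp[OF assms d2] by simp
  also have "\<dots> = mobf 1 0 0 1" using assms by (simp add: algebra_simps)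
  finally show "mobf a b c d \<circ> mobf d (-b) (-c) a = id" by (simp add: mobf_id)
qed

lemma PSL2R_H: "g \<in> PSL2R \<Longrightarrow> Im z > 0 \<Longrightarrow> Im (g z) > 0"
  using PSL2R_iff mobf_H by auto

lemma PSL2R_cd: "g \<in> PSL2R \<Longrightarrow> Im z > 0 \<Longrightarrow> Im w > 0 \<Longrightarrow> cd (g z) (g w) = cd z w"
  unfolding PSL2R_iff mobf_def using cd_mobr by auto

lemma PSL2R_hd: "g \<in> PSL2R \<Longrightarrow> Im z > 0 \<Longrightarrow> Im w > 0 \<Longrightarrow> hdist (g z) (g w) = hdist z w"
  unfolding hdist_def using PSL2R_cd by simp

lemma PSL2R_comp: "g \<in> PSL2R \<Longrightarrow> h \<in> PSL2R \<Longrightarrow> g \<circ> h \<in> PSL2R"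
  unfolding PSL2R_iff using mobf_comp by metis

lemma id_PSL2R: "id \<in> PSL2R"
  unfolding PSL2R_iff using mobf_id by (metis mult_1 mult_zero_left diff_zero)

lemma group_psl: "group psl_group"
proof (rule groupI)
  show "x \<otimes>\<^bsub>psl_group\<^esub> y \<in> carrier psl_group" if "x \<in> carrier psl_group" "y \<in> carrier psl_group" for x y
    using that PSL2R_comp by (simp add: psl_group_def)
  show "\<one>\<^bsub>psl_group\<^esub> \<in> carrier psl_group" using id_PSL2R by (simp add: psl_group_def)
  show "x \<otimes>\<^bsub>psl_group\<^esub> y \<otimes>\<^bsub>psl_group\<^esub> z = x \<otimes>\<^bsub>psl_group\<^esub> (y \<otimes>\<^bsub>psl_group\<^esub> z)" for x y z
    by (simp add: psl_group_def comp_assoc)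
  show "\<one>\<^bsub>psl_group\<^esub> \<otimes>\<^bsub>psl_group\<^esub> x = x" for x by (simp add: psl_group_def)
  show "\<exists>y\<in>carrier psl_group. y \<otimes>\<^bsub>psl_group\<^esub> x = \<one>\<^bsub>psl_group\<^esub>" if "x \<in> carrier psl_group" for x
  proof -
    have "x \<in> PSL2R" using that by (simp add: psl_group_def)
    then obtain a b c d where x: "a * d - b * c = 1" "x = mobf a b c d" unfolding PSL2R_iff by blast
    have "mobf d (-b) (-c) a \<in> PSL2R" using PSL2R_iff mobf_inv(3)[OF x(1)] by blast
    thus ?thesis
      apply (intro bexI[of _ "mobf d (-b) (-c) a"])
      using mobf_inv[OF x(1)] x by (auto simp: psl_group_def)
  qed
qed

lemma inv_psl:
  assumes "a * d - b * c = 1"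
  shows "inv\<^bsub>psl_group\<^esub> (mobf a b c d) = mobf d (-b) (-c) a"
proof -
  interpret group psl_group by (rule group_psl)
    have mem: "mobf d (-b) (-c) a \<in> PSL2R" "mobf a b c d \<in> PSL2R"
      using PSL2R_iff mobf_inv(3)[OF assms] assms by blast+
    show ?thesis
    apply (rule inv_equality)
    using mobf_inv[OF assms] mem
    by (auto simp: psl_group_def)
qed

lemma cd_i_mobr:
  assumes "a * d - b * c = 1"
  shows "cd \<i> (mobr a b c d \<i>) = (a^2 + b^2 + c^2 + d^2) / 2"
proof -
  have p: "Im \<i> > 0" by simp
  have nz: "of_real c * \<i> + of_real d \<noteq> 0" using denom_nz[OF assms p] .
  have m: "(cmod (of_real c * \<i> + of_real d))^2 = c^2 + d^2" by (simp add: cmod_power2)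
  have nz2: "c^2 + d^2 > 0" using nz m by (metis zero_less_norm_iff zero_less_power)
  have im: "Im (mobr a b c d \<i>) = 1 / (c^2 + d^2)" using Im_mobr[OF assms p] m by simp
  have "mobr a b c d \<i> - \<i> = ((of_real b + of_real c) + \<i> * (of_real a - of_real d)) / (of_real c * \<i> + of_real d)"
    unfolding mobr_def using nz by (simp add: field_simps)
  hence "cmod (\<i> - mobr a b c d \<i>) = cmod ((of_real b + of_real c) + \<i> * (of_real a - of_real d)) / cmod (of_real c * \<i> + of_real d)"
    by (metis norm_minus_commute norm_divide)
  moreover have "(cmod ((of_real b + of_real c) + \<i> * (of_real a - of_real d)))^2 = (b + c)^2 + (a - d)^2"
    by (simp add: cmod_power2)
  ultimately have "(cmod (\<i> - mobr a b c d \<i>))^2 = ((b + c)^2 + (a - d)^2) / (c^2 + d^2)"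
    using m by (simp add: power_divide)
  hence "cd \<i> (mobr a b c d \<i>) = 1 + ((b + c)^2 + (a - d)^2) / 2"
    unfolding cd_def using im nz2 by (simp add: field_simps)
  also have "\<dots> = (a^2 + b^2 + c^2 + d^2) / 2 + (1 - (a * d - b * c))"
    by (simp add: power2_eq_square field_simps)
  finally show ?thesis using assms by simp
qed

lemma norm_mk_le: "norm (mk a b c d) \<le> \<bar>a\<bar> + \<bar>b\<bar> + \<bar>c\<bar> + \<bar>d\<bar>"
proof -
  have "norm (mk a b c d) \<le> (\<Sum>i\<in>UNIV. norm (mk a b c d $ i))"
    unfolding norm_vec_def by (rule L2_set_le_sum) simp
  also have "\<dots> = norm (mk a b c d $ 1) + norm (mk a b c d $ 2)" by (simp add: sum_2)
  also have "norm (mk a b c d $ 1) \<le> \<bar>a\<bar> + \<bar>b\<bar>"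
    using norm_le_l1_cart[of "mk a b c d $ 1"] by (simp add: sum_2)
  also have "norm (mk a b c d $ 2) \<le> \<bar>c\<bar> + \<bar>d\<bar>"
    using norm_le_l1_cart[of "mk a b c d $ 2"] by (simp add: sum_2)
  finally show ?thesis by simp
qed

lemma mk_diff: "mk a b c d - mk a' b' c' d' = mk (a - a') (b - b') (c - c') (d - d')"
  by (simp add: vec_eq_iff forall_2)

lemma floor_eq_close: "\<lfloor>x\<rfloor> = \<lfloor>y\<rfloor> \<Longrightarrow> \<bar>x - y\<bar> < (1::real)"
  by (smt (verit) floor_le_iff floor_less_iff le_floor_iff)

locale fuchs =
  fixes \<Gamma> :: "(complex \<Rightarrow> complex) set"
  assumes sub: "subgroup \<Gamma> psl_group" and disc: "discrete_in_PSL \<Gamma>"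
begin

abbreviation "G \<equiv> psl_group\<lparr>carrier := \<Gamma>\<rparr>"

lemma grpG: "group G"
  using subgroup.subgroup_is_group[OF sub group_psl] .

lemma G_simps [simp]: "carrier G = \<Gamma>" "mult G = (\<circ>)" "one G = id"
  by (simp_all add: psl_group_def)

lemma Gam_PSL: "g \<in> \<Gamma> \<Longrightarrow> g \<in> PSL2R"
  using subgroup.subset[OF sub] by (auto simp: psl_group_def)

lemma id_in [simp]: "id \<in> \<Gamma>"
  using subgroup.one_closed[OF sub] by (simp add: psl_group_def)

lemma comp_in: "g \<in> \<Gamma> \<Longrightarrow> h \<in> \<Gamma> \<Longrightarrow> g \<circ> h \<in> \<Gamma>"
  using subgroup.m_closed[OF sub] by (simp add: psl_group_def)

definition ginv where "ginv g = inv\<^bsub>G\<^esub> g"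

lemma ginv_in: "g \<in> \<Gamma> \<Longrightarrow> ginv g \<in> \<Gamma>"
  unfolding ginv_def using group.inv_closed[OF grpG] by simp

lemma ginv_l: "g \<in> \<Gamma> \<Longrightarrow> ginv g \<circ> g = id"
  unfolding ginv_def using group.l_inv[OF grpG] by fastforce

lemma ginv_r: "g \<in> \<Gamma> \<Longrightarrow> g \<circ> ginv g = id"
  unfolding ginv_def using group.r_inv[OF grpG] by fastforce

lemma Gam_H: "g \<in> \<Gamma> \<Longrightarrow> Im z > 0 \<Longrightarrow> Im (g z) > 0"
  using Gam_PSL PSL2R_H by blast

lemma Gam_hd: "g \<in> \<Gamma> \<Longrightarrow> Im z > 0 \<Longrightarrow> Im w > 0 \<Longrightarrow> hdist (g z) (g w) = hdist z w"
  using Gam_PSL PSL2R_hd by blast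

lemma Gam_cd: "g \<in> \<Gamma> \<Longrightarrow> Im z > 0 \<Longrightarrow> Im w > 0 \<Longrightarrow> cd (g z) (g w) = cd z w"
  using Gam_PSL PSL2R_cd by blast

lemma mobf_inv_in:
  assumes "a * d - b * c = 1" "mobf a b c d \<in> \<Gamma>"
  shows "mobf d (-b) (-c) a \<in> \<Gamma>"
  using subgroup.m_inv_closed[OF sub, of "mobf a b c d"] assms inv_psl[OF assms(1)]
  by (simp add: psl_group_def)

lemma fin_ball: "finite {g \<in> \<Gamma>. hdist \<i> (g \<i>) \<le> R}"
proof (cases "R \<ge> 0")
  case False
  have "0 \<le> hdist \<i> (g \<i>)" if "g \<in> \<Gamma>" for g using hd_nonneg[of \<i> "g \<i>"] Gam_H[OF that, of \<i>] by simp
  hence "{g \<in> \<Gamma>. hdist \<i> (g \<i>) \<le> R} = {}" using False by force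
  thus ?thesis by (metis finite.emptyI)
next
  case True
  define \<beta> where "\<beta> = sqrt (2 * cosh R)"
  have \<beta>0: "\<beta> \<ge> 0" unfolding \<beta>_def by simp
  obtain e where e: "e > 0" "\<And>B. det B = 1 \<Longrightarrow> mob B \<in> \<Gamma> \<Longrightarrow> norm (B - mk 1 0 0 1) < e \<Longrightarrow> mob B = mob (mk 1 0 0 1)"
    using disc unfolding discrete_in_PSL_def
    by (metis det_mk mob_mk mobf_id id_in mult_1 mult_zero_left diff_zero)
  define \<eta> where "\<eta> = e / (8 * (\<beta> + 1))"
  have \<eta>0: "\<eta> > 0" unfolding \<eta>_def using e \<beta>0 by simp
  have \<eta>e: "8 * \<beta> * \<eta> < e"
  proof -
    have "8 * \<beta> * \<eta> = e * (\<beta> / (\<beta> + 1))" unfolding \<eta>_def using \<beta>0 by (simp add: field_simps)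
    also have "\<dots> < e * 1" using e \<beta>0 by (intro mult_strict_left_mono) auto
    finally show ?thesis by simp
  qed
  define T where "T = {(a,b,c,d). a * d - b * c = 1 \<and> mobf a b c d \<in> \<Gamma> \<and> \<bar>a\<bar> \<le> \<beta> \<and> \<bar>b\<bar> \<le> \<beta> \<and> \<bar>c\<bar> \<le> \<beta> \<and> \<bar>d\<bar> \<le> \<beta>}"
  define F4 where "F4 = (\<lambda>(a,b,c,d). mobf a b c d)"
  have sub1: "{g \<in> \<Gamma>. hdist \<i> (g \<i>) \<le> R} \<subseteq> F4 ` T"
  proof
    fix g assume g: "g \<in> {g \<in> \<Gamma>. hdist \<i> (g \<i>) \<le> R}"
    then obtain a b c d where abcd: "a * d - b * c = 1" "g = mobf a b c d"
      using Gam_PSL PSL2R_iff by blast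
    have "cd \<i> (g \<i>) \<le> cosh R" using g hd_le_iff[of \<i> "g \<i>" R] True Gam_H by auto
    hence s: "a^2 + b^2 + c^2 + d^2 \<le> 2 * cosh R"
      using cd_i_mobr[OF abcd(1)] abcd(2) by (simp add: mobf_def)
    have bnd: "\<bar>x\<bar> \<le> \<beta>" if "x^2 \<le> 2 * cosh R" for x
      unfolding \<beta>_def using that real_le_rsqrt real_sqrt_abs by (metis real_sqrt_le_iff)
    have "\<bar>a\<bar> \<le> \<beta>" "\<bar>b\<bar> \<le> \<beta>" "\<bar>c\<bar> \<le> \<beta>" "\<bar>d\<bar> \<le> \<beta>"
    proof -
      have "a^2 \<le> 2 * cosh R" "b^2 \<le> 2 * cosh R" "c^2 \<le> 2 * cosh R" "d^2 \<le> 2 * cosh R"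
        using s zero_le_power2[of a] zero_le_power2[of b] zero_le_power2[of c] zero_le_power2[of d]
        by linarith+
      thus "\<bar>a\<bar> \<le> \<beta>" "\<bar>b\<bar> \<le> \<beta>" "\<bar>c\<bar> \<le> \<beta>" "\<bar>d\<bar> \<le> \<beta>" using bnd by auto
    qed
    thus "g \<in> F4 ` T" unfolding F4_def T_def using abcd g
      by (intro image_eqI[of _ _ "(a,b,c,d)"]) auto
  qed
  have close: "F4 t = F4 t'" if t: "t \<in> T" "t' \<in> T"
     and cl: "\<bar>fst t - fst t'\<bar> < \<eta>" "\<bar>fst (snd t) - fst (snd t')\<bar> < \<eta>"
       "\<bar>fst (snd (snd t)) - fst (snd (snd t'))\<bar> < \<eta>" "\<bar>snd (snd (snd t)) - snd (snd (snd t'))\<bar> < \<eta>" for t t'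
  proof -
    obtain a b c d where tt: "t = (a,b,c,d)" by (cases t) auto
    obtain a' b' c' d' where tt': "t' = (a',b',c',d')" by (cases t') auto
    have A: "a * d - b * c = 1" "mobf a b c d \<in> \<Gamma>" "\<bar>a\<bar> \<le> \<beta>" "\<bar>b\<bar> \<le> \<beta>" "\<bar>c\<bar> \<le> \<beta>" "\<bar>d\<bar> \<le> \<beta>"
      using t(1) tt unfolding T_def by auto
    have A': "a' * d' - b' * c' = 1" "mobf a' b' c' d' \<in> \<Gamma>"
      using t(2) tt' unfolding T_def by auto
    have cl': "\<bar>a - a'\<bar> < \<eta>" "\<bar>b - b'\<bar> < \<eta>" "\<bar>c - c'\<bar> < \<eta>" "\<bar>d - d'\<bar> < \<eta>" using cl tt tt' by auto
    have di: "d * a - (-b) * (-c) = 1" using A(1) by (simp add: algebra_simps)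
    define B where "B = mk (d*a' + (-b)*c') (d*b' + (-b)*d') ((-c)*a' + a*c') ((-c)*b' + a*d')"
    have Bc: "mob B = mobf d (-b) (-c) a \<circ> mobf a' b' c' d'"
      unfolding B_def using mobf_comp(1)[OF di A'(1)] by simp
    have Bd: "det B = 1" unfolding B_def using mobf_comp(2)[OF di A'(1)] by simp
    have Bin: "mob B \<in> \<Gamma>" unfolding Bc using comp_in mobf_inv_in[OF A(1,2)] A'(2) by blast
    have pb: "\<bar>x * (y - z)\<bar> \<le> \<beta> * \<eta>" if "\<bar>x\<bar> \<le> \<beta>" "\<bar>y - z\<bar> < \<eta>" for x y z
      using that \<beta>0 \<eta>0 by (simp add: abs_mult mult_mono)
    have e1: "d*a' + (-b)*c' - 1 = d * (a' - a) - b * (c' - c)" using A(1) by (simp add: algebra_simps)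
    have e2: "d*b' + (-b)*d' = d * (b' - b) - b * (d' - d)" by (simp add: algebra_simps)
    have e3: "(-c)*a' + a*c' = - c * (a' - a) + a * (c' - c)" by (simp add: algebra_simps)
    have e4: "(-c)*b' + a*d' - 1 = - c * (b' - b) + a * (d' - d)" using A(1) by (simp add: algebra_simps)
    have cl'': "\<bar>a' - a\<bar> < \<eta>" "\<bar>b' - b\<bar> < \<eta>" "\<bar>c' - c\<bar> < \<eta>" "\<bar>d' - d\<bar> < \<eta>" using cl' by auto
    have "norm (B - mk 1 0 0 1) \<le> \<bar>d*a' + (-b)*c' - 1\<bar> + \<bar>d*b' + (-b)*d'\<bar> + \<bar>(-c)*a' + a*c'\<bar> + \<bar>(-c)*b' + a*d' - 1\<bar>"
      unfolding B_def mk_diff using norm_mk_le by simp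
    also have "\<dots> \<le> 8 * \<beta> * \<eta>"
    proof -
      have "\<bar>d * (a' - a) - b * (c' - c)\<bar> \<le> 2 * \<beta> * \<eta>"
        using pb[OF A(6) cl''(1)] pb[OF A(4) cl''(3)] by linarith
      moreover have "\<bar>d * (b' - b) - b * (d' - d)\<bar> \<le> 2 * \<beta> * \<eta>"
        using pb[OF A(6) cl''(2)] pb[OF A(4) cl''(4)] by linarith
      moreover have "\<bar>- c * (a' - a) + a * (c' - c)\<bar> \<le> 2 * \<beta> * \<eta>"
        using pb[OF _ cl''(1), of "-c"] pb[OF A(3) cl''(3)] A(5) abs_triangle_ineq[of "- c * (a' - a)" "a * (c' - c)"] by simp
      moreover have "\<bar>- c * (b' - b) + a * (d' - d)\<bar> \<le> 2 * \<beta> * \<eta>"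
        using pb[OF _ cl''(2), of "-c"] pb[OF A(3) cl''(4)] A(5) abs_triangle_ineq[of "- c * (b' - b)" "a * (d' - d)"] by simp
      ultimately show ?thesis unfolding e1 e2 e3 e4 by linarith
    qed
    also have "\<dots> < e" by (rule \<eta>e)
    finally have "mob B = id" using e(2)[OF Bd Bin] mobf_id by simp
    hence "mobf d (-b) (-c) a \<circ> mobf a' b' c' d' = id" using Bc by simp
    hence "mobf a b c d \<circ> (mobf d (-b) (-c) a \<circ> mobf a' b' c' d') = mobf a b c d" by simp
    hence "mobf a' b' c' d' = mobf a b c d" using mobf_inv(2)[OF A(1)] by (simp add: comp_assoc[symmetric])
    thus ?thesis unfolding F4_def tt tt' by simp
  qed
  define key where "key = (\<lambda>(a,b,c,d). (\<lfloor>a / \<eta>\<rfloor>, \<lfloor>b / \<eta>\<rfloor>, \<lfloor>c / \<eta>\<rfloor>, \<lfloor>d / \<eta>\<rfloor>))"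
  define K where "K = \<lceil>\<beta> / \<eta>\<rceil> + 1"
  have fl: "\<lfloor>x / \<eta>\<rfloor> \<in> {-K..K}" if "\<bar>x\<bar> \<le> \<beta>" for x
  proof -
    have "\<bar>x / \<eta>\<bar> \<le> \<beta> / \<eta>" using that \<eta>0 by (simp add: abs_divide divide_right_mono)
    hence "- (\<beta> / \<eta>) \<le> x / \<eta>" "x / \<eta> \<le> \<beta> / \<eta>" by linarith+
    moreover have "\<beta> / \<eta> \<le> of_int \<lceil>\<beta> / \<eta>\<rceil>" by (rule le_of_int_ceiling)
    ultimately show ?thesis unfolding K_def by (auto intro!: floor_mono simp: le_floor_iff floor_le_iff) linarith+
  qed
  have fk: "finite (key ` T)"
  proof (rule finite_subset)
    show "key ` T \<subseteq> {-K..K} \<times> {-K..K} \<times> {-K..K} \<times> {-K..K}"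
      unfolding key_def T_def using fl by auto
  qed auto
  define rep where "rep = (\<lambda>\<kappa>. SOME t. t \<in> T \<and> key t = \<kappa>)"
  have sub2: "F4 ` T \<subseteq> (\<lambda>\<kappa>. F4 (rep \<kappa>)) ` (key ` T)"
  proof
    fix g assume "g \<in> F4 ` T"
    then obtain t where t: "t \<in> T" "g = F4 t" by auto
    have ex: "\<exists>t'. t' \<in> T \<and> key t' = key t" using t(1) by blast
    define t' where "t' = rep (key t)"
    have t': "t' \<in> T" "key t' = key t" using someI_ex[OF ex] unfolding t'_def rep_def by auto
    have flc: "\<bar>x - y\<bar> < \<eta>" if "\<lfloor>x / \<eta>\<rfloor> = \<lfloor>y / \<eta>\<rfloor>" for x y
    proof -
      have "\<bar>x / \<eta> - y / \<eta>\<bar> < 1" using floor_eq_close[OF that] .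
      hence "\<bar>x - y\<bar> / \<eta> < 1" using \<eta>0 by (simp add: diff_divide_distrib[symmetric] abs_divide)
      thus ?thesis using \<eta>0 by simp
    qed
    have "F4 t' = F4 t"
      apply (rule close[OF t'(1) t(1)])
      using t'(2) flc unfolding key_def by (auto split: prod.splits)
    thus "g \<in> (\<lambda>\<kappa>. F4 (rep \<kappa>)) ` (key ` T)" using t t'_def
      by (intro image_eqI[of _ _ "key t"]) auto
  qed
  show ?thesis using sub1 sub2 fk by (meson finite_imageI finite_subset)
qed

end

lemma cosh_pos: "cosh (x::real) > 0"
  using cosh_real_ge_1[of x] by linarith

lemma cd_ge_axis:
  assumes "Im z > 0" "Im w > 0" "Re z * Re w \<le> 0"
  shows "cd z w \<ge> cmod z / Im z"
proof -
  define x where "x = Re z" define y where "y = Im z" define x' where "x' = Re w" define y' where "y' = Im w"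
  define r where "r = cmod z"
  have r2: "r^2 = x^2 + y^2" unfolding r_def x_def y_def by (simp add: cmod_power2)
  have r0: "r \<ge> 0" unfolding r_def by simp
  have yp: "y > 0" "y' > 0" using assms x_def y_def y'_def by auto
  have "cd z w = 1 + ((x - x')^2 + (y - y')^2) / (2 * y * y')"
    unfolding cd_def x_def y_def x'_def y'_def by (simp add: cmod_power2)
  also have "\<dots> \<ge> 1 + (x^2 + (y - y')^2) / (2 * y * y')"
  proof -
    have ex: "(x - x')^2 = x^2 - 2*(x*x') + x'^2" by (simp add: power2_eq_square algebra_simps)
    have "x * x' \<le> 0" using assms(3) unfolding x_def x'_def .
    hence "(x - x')^2 \<ge> x^2" unfolding ex using zero_le_power2[of x'] by linarith
    thus ?thesis using yp by (simp add: divide_right_mono)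
  qed
  moreover have "1 + (x^2 + (y - y')^2) / (2 * y * y') = (r^2 + y'^2) / (2 * y * y')"
  proof -
    have "1 + (x^2 + (y - y')^2) / (2 * y * y') = (2 * y * y' + (x^2 + (y - y')^2)) / (2 * y * y')"
      using yp by (simp add: add_divide_distrib)
    also have "2 * y * y' + (x^2 + (y - y')^2) = x^2 + y^2 + y'^2" by (simp add: power2_eq_square algebra_simps)
    finally show ?thesis using r2 by simp
  qed
  moreover have "(r^2 + y'^2) / (2 * y * y') \<ge> r / y"
  proof -
    have "(r^2 + y'^2) / (2 * y * y') - r / y = (r - y')^2 / (2 * y * y')"
      using yp by (simp add: field_simps power2_eq_square)
    moreover have "(r - y')^2 / (2 * y * y') \<ge> 0" using yp by simp
    ultimately show ?thesis by linarith
  qed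
  ultimately show ?thesis unfolding r_def y_def by linarith
qed

lemma cd_axis_point:
  assumes "Im z > 0"
  shows "cd z (\<i> * of_real (cmod z)) = cmod z / Im z"
proof -
  define x where "x = Re z" define y where "y = Im z" define r where "r = cmod z"
  have r2: "r^2 = x^2 + y^2" unfolding r_def x_def y_def by (simp add: cmod_power2)
  have yp: "y > 0" using assms y_def by simp
  have r0: "r > 0" unfolding r_def using assms by (auto simp: zero_less_norm_iff)
  have "cd z (\<i> * of_real r) = 1 + (x^2 + (y - r)^2) / (2 * y * r)"
    unfolding cd_def x_def y_def by (simp add: cmod_power2)
  also have "\<dots> = (2*y*r + (x^2 + (y - r)^2)) / (2 * y * r)" using yp r0 by (simp add: add_divide_distrib)
  also have "2*y*r + (x^2 + (y - r)^2) = x^2 + (y - r)^2 + 2*y*r" by simp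
  also have "x^2 + (y - r)^2 + 2*y*r = x^2 + y^2 + r^2" by (simp add: power2_eq_square algebra_simps)
  also have "\<dots> = 2 * r^2" using r2 by simp
  also have "2 * r^2 / (2 * y * r) = r / y" using yp r0 by (simp add: power2_eq_square)
  finally show ?thesis unfolding r_def y_def .
qed

lemma cosh_ge_ratio: "Im z > 0 \<Longrightarrow> Im w > 0 \<Longrightarrow> cosh (ln (cmod z) - ln (cmod w)) \<le> cd z w"
proof -
  assume zp: "Im z > 0" and wp: "Im w > 0"
  define x where "x = Re z" define y where "y = Im z" define x' where "x' = Re w" define y' where "y' = Im w"
  define r where "r = cmod z" define s where "s = cmod w"
  have r2: "r^2 = x^2 + y^2" unfolding r_def x_def y_def by (simp add: cmod_power2)
  have s2: "s^2 = x'^2 + y'^2" unfolding s_def x'_def y'_def by (simp add: cmod_power2)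
  have yp: "y > 0" "y' > 0" using zp wp y_def y'_def by auto
  have r0: "r > 0" "s > 0" unfolding r_def s_def using zp wp by (auto simp: zero_less_norm_iff)
  have cd: "cd z w = (r^2 + s^2 - 2 * x * x') / (2 * y * y')"
    unfolding cd_alt[OF zp wp] r2 s2 x_def y_def x'_def y'_def by simp
  have ch: "cosh (ln r - ln s) = (r^2 + s^2) / (2 * r * s)"
  proof -
    have "ln r - ln s = ln (r / s)" using r0 by (simp add: ln_div)
    hence "cosh (ln r - ln s) = (r / s + inverse (r / s)) / 2" using r0 by (simp add: cosh_ln_real)
    thus ?thesis using r0 by (simp add: field_simps power2_eq_square)
  qed
  have rsP: "r * s \<ge> y * y'"
  proof -
    have "y^2 \<le> r^2" "y'^2 \<le> s^2" using r2 s2 by simp_all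
    hence "r \<ge> y" "s \<ge> y'" using power2_le_imp_le r0 by (auto simp del: zero_le_power2 intro: less_imp_le)
    thus ?thesis using yp by (simp add: mult_mono)
  qed
  have cs: "r * s \<ge> x * x' + y * y'"
  proof -
    have q: "(r * s)^2 = (x^2 + y^2) * (x'^2 + y'^2)" by (simp add: power_mult_distrib r2 s2)
    have "(x^2 + y^2) * (x'^2 + y'^2) - (x * x' + y * y')^2 = (x * y' - x' * y)^2"
      by (simp add: power2_eq_square algebra_simps)
    hence "(r * s)^2 - (x * x' + y * y')^2 = (x * y' - x' * y)^2" using q by simp
    hence "(x * x' + y * y')^2 \<le> (r * s)^2" using zero_le_power2[of "x * y' - x' * y"] by linarith
    hence "\<bar>x * x' + y * y'\<bar> \<le> \<bar>r * s\<bar>" by (simp only: abs_le_square_iff)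
    thus ?thesis using r0 by simp
  qed
  have key: "(r^2 + s^2) * (y * y') \<le> (r * s) * (r^2 + s^2 - 2 * x * x')"
  proof (cases "x * x' \<le> 0")
    case True
    have "(r^2 + s^2) * (y * y') \<le> (r^2 + s^2) * (r * s)" using rsP by (simp add: mult_left_mono)
    also have "\<dots> \<le> (r * s) * (r^2 + s^2 - 2 * x * x')"
    proof -
      have "(r * s) * (r^2 + s^2 - 2 * x * x') = (r^2 + s^2) * (r * s) + (r * s) * (-2 * (x * x'))"
        by (simp add: algebra_simps)
      moreover have "(r * s) * (-2 * (x * x')) \<ge> 0"
      proof -
        have "-2 * (x * x') \<ge> 0" using True by linarith
        moreover have "r * s \<ge> 0" using r0 by simp
        ultimately show ?thesis by (rule mult_nonneg_nonneg[rotated])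
      qed
      ultimately show ?thesis by linarith
    qed
    finally show ?thesis .
  next
    case False
    have "(r^2 + s^2) * (r * s - y * y') \<ge> (r^2 + s^2) * (x * x')" using cs by (simp add: mult_left_mono)
    moreover have "(r^2 + s^2) * (x * x') \<ge> 2 * r * s * (x * x')"
    proof -
      have "(r - s)^2 \<ge> 0" by simp
      hence "r^2 + s^2 \<ge> 2 * r * s" by (simp add: power2_eq_square algebra_simps)
      thus ?thesis using False by (simp add: mult_right_mono)
    qed
    ultimately show ?thesis by (simp add: algebra_simps)
  qed
  have "(r^2 + s^2) / (2 * r * s) \<le> (r^2 + s^2 - 2 * x * x') / (2 * y * y')"
  proof -
    have "(r^2 + s^2) / (2 * r * s) = ((r^2 + s^2) * (y * y')) / (2 * r * s * (y * y'))" using r0 yp by simp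
    moreover have "(r^2 + s^2 - 2 * x * x') / (2 * y * y') = ((r * s) * (r^2 + s^2 - 2 * x * x')) / (2 * r * s * (y * y'))"
      using r0 yp by simp
    moreover have "((r^2 + s^2) * (y * y')) / (2 * r * s * (y * y')) \<le> ((r * s) * (r^2 + s^2 - 2 * x * x')) / (2 * r * s * (y * y'))"
      using key r0 yp by (intro divide_right_mono) auto
    ultimately show ?thesis by simp
  qed
  thus ?thesis using ch cd unfolding r_def s_def by simp
qed

lemma log_lip: "Im z > 0 \<Longrightarrow> Im w > 0 \<Longrightarrow> \<bar>ln (cmod z) - ln (cmod w)\<bar> \<le> hdist z w"
  using cosh_ge_ratio[of z w] cosh_hd[of z w] hd_nonneg[of z w]
  by (metis abs_ge_zero cosh_real_abs cosh_real_nonneg_le_iff)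

definition pt :: "real \<Rightarrow> real \<Rightarrow> complex" where
  "pt t s = Complex (exp t * (sinh s / cosh s)) (exp t / cosh s)"

lemma pt_Im: "Im (pt t s) > 0" unfolding pt_def using cosh_pos[of s] by simp

lemma pt_Re: "Re (pt t s) = exp t * (sinh s / cosh s)" unfolding pt_def by simp

lemma pt_norm: "cmod (pt t s) = exp t"
proof -
  have c: "cosh s > 0" using cosh_pos .
  have "(cmod (pt t s))^2 = (exp t)^2 * ((sinh s)^2 + 1) / (cosh s)^2"
    unfolding pt_def cmod_power2 using c by (simp add: field_simps power2_eq_square)
  also have "\<dots> = (exp t)^2" using c by (simp add: cosh_square_eq[symmetric])
  finally show ?thesis by (simp add: power2_eq_iff_nonneg)
qed

lemma pt_ratio: "cmod (pt t s) / Im (pt t s) = cosh s"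
  unfolding pt_norm using cosh_pos[of s] by (simp add: pt_def)

lemma cd_pt: "cd (pt t s) (pt t s') = cosh (s - s')"
proof -
  have c: "cosh s > 0" "cosh s' > 0" using cosh_pos by auto
  have e: "(cosh s)^2 = (sinh s)^2 + 1" "(cosh s')^2 = (sinh s')^2 + 1" using cosh_square_eq by auto
  define S where "S = sinh s" define C where "C = cosh s" define S' where "S' = sinh s'" define C' where "C' = cosh s'"
  have cp: "C > 0" "C' > 0" using c C_def C'_def by auto
  have e': "C^2 = S^2 + 1" "C'^2 = S'^2 + 1" using e S_def C_def S'_def C'_def by auto
  have "cd (pt t s) (pt t s') = 1 + ((exp t)^2 * ((S / C - S' / C')^2 + (1 / C - 1 / C')^2)) / (2 * (exp t / C) * (exp t / C'))"
    unfolding cd_def pt_def cmod_power2 S_def C_def S'_def C'_def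
    by (simp add: power_mult_distrib right_diff_distrib[symmetric] power2_eq_square algebra_simps)
  also have "\<dots> = 1 + ((S / C - S' / C')^2 + (1 / C - 1 / C')^2) * (C * C') / 2"
    using cp by (simp add: field_simps) (simp add: power2_eq_square)
  also have "((S / C - S' / C')^2 + (1 / C - 1 / C')^2) = ((S * C' - S' * C)^2 + (C' - C)^2) / (C * C')^2"
    using cp by (simp add: field_simps)
  also have "(S * C' - S' * C)^2 + (C' - C)^2 = (S^2 + 1) * C'^2 + (S'^2 + 1) * C^2 - 2 * S * S' * C * C' - 2 * C * C'"
    by (simp add: power2_eq_square algebra_simps)
  also have "\<dots> = 2 * C^2 * C'^2 - 2 * S * S' * C * C' - 2 * C * C'"
    unfolding e'[symmetric] by (simp add: algebra_simps)
  also have "1 + (2 * C^2 * C'^2 - 2 * S * S' * C * C' - 2 * C * C') / (C * C')^2 * (C * C') / 2 = C * C' - S * S'"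
    using cp by (simp add: field_simps power2_eq_square)
  also have "\<dots> = cosh s * cosh s' - sinh s * sinh s'" unfolding S_def C_def S'_def C'_def ..
  also have "\<dots> = cosh (s - s')" by (simp add: cosh_diff)
  finally show ?thesis .
qed

lemma hd_pt: "hdist (pt t s) (pt t s') = \<bar>s - s'\<bar>"
  unfolding hdist_def cd_pt by (metis arcosh_cosh_real abs_ge_zero cosh_real_abs)

lemma pt_axis: "pt t 0 = \<i> * of_real (exp t)"
  unfolding pt_def by (simp add: complex_eq_iff)

lemma cd_axis: "cd (pt t 0) (pt t' 0) = cosh (t - t')"
proof -
  define a where "a = exp t" define b where "b = exp t'"
  have ab: "a > 0" "b > 0" unfolding a_def b_def by auto
  have "cd (pt t 0) (pt t' 0) = 1 + (a - b)^2 / (2 * a * b)"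
    unfolding cd_def pt_def cmod_power2 a_def b_def by simp
  also have "\<dots> = (a / b + b / a) / 2" using ab by (simp add: field_simps power2_eq_square)
  also have "a / b = exp (t - t')" unfolding a_def b_def by (simp add: exp_diff)
  also have "b / a = exp (-(t - t'))" unfolding a_def b_def by (simp add: exp_diff exp_minus field_simps)
  also have "(exp (t - t') + exp (-(t - t'))) / 2 = cosh (t - t')" by (simp add: cosh_def)
  finally show ?thesis .
qed

lemma hd_axis: "hdist (pt t 0) (pt t' 0) = \<bar>t - t'\<bar>"
  unfolding hdist_def cd_axis by (metis arcosh_cosh_real abs_ge_zero cosh_real_abs)

lemma cont_cd: "Im w > 0 \<Longrightarrow> continuous_on {z. Im z > 0} (\<lambda>z. cd z w)"
  unfolding cd_def by (intro continuous_intros) auto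

lemma open_ball_cd: "Im w > 0 \<Longrightarrow> open {z. Im z > 0 \<and> cd z w < c}"
proof -
  assume w: "Im w > 0"
  have "{z. Im z > 0 \<and> cd z w < c} = {z. Im z > 0} \<inter> (\<lambda>z. cd z w) -` {..<c}" by auto
  thus ?thesis using continuous_open_preimage[OF cont_cd[OF w] open_halfspace_Im_gt] by simp
qed

context fuchs
begin

lemma orbit_eq: "h \<in> \<Gamma> \<Longrightarrow> orbit \<Gamma> (h z) = orbit \<Gamma> z"
proof -
  assume h: "h \<in> \<Gamma>"
  show ?thesis unfolding orbit_def
  proof (intro equalityI subsetI)
    fix y assume "y \<in> (\<lambda>g. g (h z)) ` \<Gamma>"
    then obtain g where "g \<in> \<Gamma>" "y = g (h z)" by auto
    thus "y \<in> (\<lambda>g. g z) ` \<Gamma>" using comp_in[OF _ h] by (intro image_eqI[of _ _ "g \<circ> h"]) auto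
  next
    fix y assume "y \<in> (\<lambda>g. g z) ` \<Gamma>"
    then obtain g where g: "g \<in> \<Gamma>" "y = g z" by auto
    have "g z = (g \<circ> ginv h) (h z)" using fun_cong[OF ginv_l[OF h], of z] by simp
    thus "y \<in> (\<lambda>g. g (h z)) ` \<Gamma>" using g comp_in[OF g(1) ginv_in[OF h]]
      by (intro image_eqI[of _ _ "g \<circ> ginv h"]) auto
  qed
qed

lemma hd_ginv: "g \<in> \<Gamma> \<Longrightarrow> Im z > 0 \<Longrightarrow> Im w > 0 \<Longrightarrow> hdist (ginv g z) w = hdist z (g w)"
proof -
  assume g: "g \<in> \<Gamma>" and z: "Im z > 0" and w: "Im w > 0"
  have "hdist (g (ginv g z)) (g w) = hdist (ginv g z) w"
    using Gam_hd[OF g] Gam_H[OF ginv_in[OF g] z] w by simp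
  moreover have "g (ginv g z) = z" using ginv_r[OF g] by (metis comp_apply id_apply)
  ultimately show ?thesis by simp
qed

end

locale fuchs2 = fuchs +
  assumes cc: "cocompact \<Gamma>"
begin

lemma covering: "\<exists>D::nat. \<forall>z. Im z > 0 \<longrightarrow> (\<exists>g\<in>\<Gamma>. hdist z (g \<i>) < real D)"
proof -
  define H where "H = upper_half_plane"
  define X where "X = subtopology euclidean H"
  define f where "f = orbit \<Gamma>"
  define Q where "Q = quotient_topology X f"
  have H: "H = {z. Im z > 0}" unfolding H_def upper_half_plane_def ..
  have topX: "topspace X = H" unfolding X_def by simp
  have oQ: "openin Q U \<longleftrightarrow> U \<subseteq> f ` H \<and> openin X (H \<inter> f -` U)" for U
    unfolding Q_def quotient_topology_def using istopology_quotient[of f X] topX by simp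
  have tQ: "topspace Q = f ` H"
  proof -
    have "H \<inter> f -` (f ` H) = H" by auto
    hence "openin Q (f ` H)" unfolding oQ using openin_topspace[of X] topX by simp
    thus ?thesis unfolding topspace_def using oQ by auto
  qed
  define V where "V = (\<lambda>n::nat. {z. Im z > 0 \<and> (\<exists>g\<in>\<Gamma>. hdist z (g \<i>) < real n)})"
  define Ob where "Ob = (\<lambda>n::nat. f ` {z. Im z > 0 \<and> hdist z \<i> < real n})"
  have pre: "H \<inter> f -` Ob n = V n" for n
  proof (intro equalityI subsetI)
    fix z assume "z \<in> H \<inter> f -` Ob n"
    then obtain w where zw: "Im z > 0" "Im w > 0" "hdist w \<i> < n" "f z = f w" unfolding Ob_def H by auto
    have "w \<in> f w" unfolding f_def orbit_def using id_in by (metis id_apply image_eqI)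
    then obtain h where h: "h \<in> \<Gamma>" "w = h z" using zw(4) unfolding f_def orbit_def by auto
    have i1: "Im (ginv h \<i>) > 0" using Gam_H[OF ginv_in[OF h(1)]] by simp
    have "hdist (h z) (h (ginv h \<i>)) = hdist z (ginv h \<i>)" using Gam_hd[OF h(1) zw(1) i1] .
    moreover have "h (ginv h \<i>) = \<i>" using ginv_r[OF h(1)] by (metis comp_apply id_apply)
    ultimately have "hdist z (ginv h \<i>) < n" using zw(3) h(2) by simp
    thus "z \<in> V n" unfolding V_def using zw(1) ginv_in[OF h(1)] by auto
  next
    fix z assume "z \<in> V n"
    then obtain g where g: "Im z > 0" "g \<in> \<Gamma>" "hdist z (g \<i>) < n" unfolding V_def by auto
    define w where "w = ginv g z"
    have w: "Im w > 0" unfolding w_def using Gam_H[OF ginv_in[OF g(2)] g(1)] .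
    have "hdist w \<i> = hdist z (g \<i>)" unfolding w_def using hd_ginv[OF g(2) g(1)] by simp
    moreover have "f w = f z" unfolding w_def f_def using orbit_eq[OF ginv_in[OF g(2)]] .
    ultimately show "z \<in> H \<inter> f -` Ob n" unfolding Ob_def H using g w by (auto intro!: image_eqI[of _ _ w])
  qed
  have openV: "open (V n)" for n
  proof -
    have "V n = (\<Union>g\<in>\<Gamma>. {z. Im z > 0 \<and> cd z (g \<i>) < cosh (real n)})"
    proof (intro equalityI subsetI)
      fix z assume "z \<in> V n"
      then obtain g where "Im z > 0" "g \<in> \<Gamma>" "hdist z (g \<i>) < n" unfolding V_def by auto
      thus "z \<in> (\<Union>g\<in>\<Gamma>. {z. Im z > 0 \<and> cd z (g \<i>) < cosh (real n)})"
        using hd_less_iff[of z "g \<i>" "real n"] Gam_H[of g \<i>] by auto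
    next
      fix z assume "z \<in> (\<Union>g\<in>\<Gamma>. {z. Im z > 0 \<and> cd z (g \<i>) < cosh (real n)})"
      then obtain g where "Im z > 0" "g \<in> \<Gamma>" "cd z (g \<i>) < cosh (real n)" by auto
      thus "z \<in> V n" unfolding V_def using hd_less_iff[of z "g \<i>" "real n"] Gam_H[of g \<i>] by auto
    qed
    moreover have "open {z. Im z > 0 \<and> cd z (g \<i>) < cosh (real n)}" if "g \<in> \<Gamma>" for g
      using open_ball_cd Gam_H[OF that, of \<i>] by simp
    ultimately show ?thesis by (simp add: open_UN)
  qed
  have openO: "openin Q (Ob n)" for n
  proof -
    have "Ob n \<subseteq> f ` H" unfolding Ob_def H by auto
    moreover have "openin X (V n)" unfolding X_def openin_subtopology
      using openV[of n] by (intro exI[of _ "V n"]) (auto simp: V_def H)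
    ultimately show ?thesis unfolding oQ pre by simp
  qed
  have cover: "topspace Q \<subseteq> \<Union>(range Ob)"
  proof
    fix q assume "q \<in> topspace Q"
    then obtain z where z: "z \<in> H" "q = f z" using tQ by auto
    define n where "n = nat \<lceil>hdist z \<i>\<rceil> + 1"
    have "hdist z \<i> < real n" unfolding n_def by linarith
    hence "q \<in> Ob n" unfolding Ob_def using z H by auto
    thus "q \<in> \<Union>(range Ob)" by auto
  qed
  have cQ: "compact_space Q" using cc unfolding cocompact_def Q_def X_def f_def H_def .
  have "\<exists>FF. finite FF \<and> FF \<subseteq> range Ob \<and> topspace Q \<subseteq> \<Union>FF"
    using cQ[unfolded compact_space_alt, rule_format, of "range Ob"] cover openO by auto
  then obtain FF where FF: "finite FF" "FF \<subseteq> range Ob" "topspace Q \<subseteq> \<Union>FF" by blast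
  obtain C where C: "finite C" "FF = Ob ` C" using finite_subset_image[OF FF(1,2)] by auto
  define M where "M = Max (insert 0 C)"
  have mono: "Ob n \<subseteq> Ob M" if "n \<in> C" for n
  proof -
    have "n \<le> M" unfolding M_def using C(1) that by simp
    thus ?thesis unfolding Ob_def by (auto intro!: image_mono)
  qed
  have "topspace Q \<subseteq> Ob M" using FF(3) C(2) mono by auto
  hence "H \<subseteq> V M" using tQ pre[of M] by blast
  thus ?thesis unfolding V_def H by auto
qed

end

context fuchs2
begin

definition Dc :: nat where "Dc = (SOME D::nat. \<forall>z. Im z > 0 \<longrightarrow> (\<exists>g\<in>\<Gamma>. hdist z (g \<i>) < real D))"

lemma Dc_prop: "Im z > 0 \<Longrightarrow> \<exists>g\<in>\<Gamma>. hdist z (g \<i>) < real Dc"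
  using someI_ex[OF covering] unfolding Dc_def by blast

definition S0 where "S0 = {g \<in> \<Gamma>. hdist \<i> (g \<i>) \<le> 2 * real Dc + 1}"

lemma S0_fin: "finite S0" unfolding S0_def by (rule fin_ball)
lemma S0_sub: "S0 \<subseteq> \<Gamma>" unfolding S0_def by auto

lemma ii_H [simp]: "Im \<i> > 0" by simp

lemma Gi_H: "g \<in> \<Gamma> \<Longrightarrow> Im (g \<i>) > 0" using Gam_H by simp

lemma ginv_app: "g \<in> \<Gamma> \<Longrightarrow> g (ginv g z) = z" using fun_cong[OF ginv_r] by simp
lemma ginv_app2: "g \<in> \<Gamma> \<Longrightarrow> ginv g (g z) = z" using fun_cong[OF ginv_l] by simp

lemma hd_translate: "g \<in> \<Gamma> \<Longrightarrow> h \<in> \<Gamma> \<Longrightarrow> hdist \<i> ((ginv g \<circ> h) \<i>) = hdist (g \<i>) (h \<i>)"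
proof -
  assume g: "g \<in> \<Gamma>" and h: "h \<in> \<Gamma>"
  have "hdist (g \<i>) (g ((ginv g \<circ> h) \<i>)) = hdist \<i> ((ginv g \<circ> h) \<i>)"
    using Gam_hd[OF g ii_H Gi_H[OF comp_in[OF ginv_in[OF g] h]]] .
  moreover have "g ((ginv g \<circ> h) \<i>) = h \<i>" using ginv_app[OF g] by simp
  ultimately show ?thesis by simp
qed

lemma S0_inv: "s \<in> S0 \<Longrightarrow> ginv s \<in> S0"
proof -
  assume s: "s \<in> S0"
  hence sG: "s \<in> \<Gamma>" using S0_sub by auto
  have "hdist \<i> (ginv s \<i>) = hdist (s \<i>) \<i>" using hd_translate[OF sG id_in] by simp
  thus ?thesis using s ginv_in[OF sG] unfolding S0_def by (simp add: hd_sym)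
qed

lemma S0_gen: "generate G S0 = \<Gamma>"
proof
  interpret GG: group G by (rule grpG)
  show "generate G S0 \<subseteq> \<Gamma>" using GG.generate_incl[of S0] S0_sub by simp
  define P where "P = generate G S0"
  have subP: "subgroup P G" unfolding P_def using GG.generate_is_subgroup[of S0] S0_sub by simp
  have PG: "P \<subseteq> \<Gamma>" using subgroup.subset[OF subP] by simp
  have Pmul: "g \<in> P \<Longrightarrow> h \<in> P \<Longrightarrow> g \<circ> h \<in> P" for g h using subgroup.m_closed[OF subP] by simp
  have idP: "id \<in> P" using subgroup.one_closed[OF subP] by simp
  have SP: "S0 \<subseteq> P" unfolding P_def by (auto intro: generate.incl)
  define r where "r = real Dc + 1/2"
  have r0: "r \<ge> 0" unfolding r_def by simp
  define W where "W = (\<lambda>g. {z. Im z > 0 \<and> hdist z (g \<i>) < r})"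
  have openW: "open (W g)" if "g \<in> \<Gamma>" for g
  proof -
    have "W g = {z. Im z > 0 \<and> cd z (g \<i>) < cosh r}"
      unfolding W_def using hd_less_iff[OF _ Gi_H[OF that] r0] by auto
    thus ?thesis using open_ball_cd[OF Gi_H[OF that]] by simp
  qed
  define U1 where "U1 = (\<Union>g\<in>P. W g)"
  define U2 where "U2 = (\<Union>g\<in>\<Gamma> - P. W g)"
  define HH where "HH = {z::complex. Im z > 0}"
  have conn: "connected HH" unfolding HH_def by (rule convex_connected[OF convex_halfspace_Im_gt])
  have o1: "open U1" unfolding U1_def using openW PG by auto
  have o2: "open U2" unfolding U2_def using openW by auto
  have cov: "HH \<subseteq> U1 \<union> U2"
  proof
    fix z assume "z \<in> HH"
    hence z: "Im z > 0" unfolding HH_def by simp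
    obtain g where g: "g \<in> \<Gamma>" "hdist z (g \<i>) < real Dc" using Dc_prop[OF z] by auto
    hence "z \<in> W g" unfolding W_def r_def using z by auto
    thus "z \<in> U1 \<union> U2" unfolding U1_def U2_def using g(1) by (cases "g \<in> P") auto
  qed
  have disj: "U1 \<inter> U2 \<inter> HH = {}"
  proof (rule ccontr)
    assume "U1 \<inter> U2 \<inter> HH \<noteq> {}"
    then obtain z g h where zgh: "g \<in> P" "h \<in> \<Gamma>" "h \<notin> P" "z \<in> W g" "z \<in> W h"
      unfolding U1_def U2_def by auto
    have g: "g \<in> \<Gamma>" using zgh(1) PG by auto
    have z: "Im z > 0" using zgh(4) unfolding W_def by auto
    have "hdist (g \<i>) (h \<i>) \<le> hdist (g \<i>) z + hdist z (h \<i>)"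
      by (rule hd_triangle[OF Gi_H[OF g] z Gi_H[OF zgh(2)]])
    also have "\<dots> < 2 * real Dc + 1" using zgh(4,5) unfolding W_def r_def by (auto simp: hd_sym)
    finally have "hdist \<i> ((ginv g \<circ> h) \<i>) \<le> 2 * real Dc + 1" using hd_translate[OF g zgh(2)] by simp
    hence "ginv g \<circ> h \<in> S0" unfolding S0_def using comp_in[OF ginv_in[OF g] zgh(2)] by simp
    hence "g \<circ> (ginv g \<circ> h) \<in> P" using Pmul zgh(1) SP by auto
    moreover have "g \<circ> (ginv g \<circ> h) = h" using ginv_r[OF g] by (simp add: comp_assoc[symmetric])
    ultimately show False using zgh(3) by simp
  qed
  have ne: "U1 \<inter> HH \<noteq> {}"
  proof -
    have "\<i> \<in> W id" unfolding W_def r_def by (simp add: hd_refl)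
    thus ?thesis unfolding U1_def HH_def using idP by auto
  qed
  have "U2 \<inter> HH = {}" using connectedD[OF conn o1 o2 disj cov] ne by auto
  show "\<Gamma> \<subseteq> generate G S0"
  proof
    fix h assume h: "h \<in> \<Gamma>"
    show "h \<in> generate G S0"
    proof (rule ccontr)
      assume "h \<notin> generate G S0"
      hence "h \<i> \<in> U2 \<inter> HH" unfolding U2_def HH_def W_def r_def P_def[symmetric]
        using h Gi_H[OF h] hd_refl[of "h \<i>"] by (auto intro!: bexI[of _ h])
      thus False using \<open>U2 \<inter> HH = {}\<close> by auto
    qed
  qed
qed

end

lemma walk_single: "x \<in> V \<Longrightarrow> walk V E [x]"
  unfolding walk_def by simp

lemma walk_cons: "walk V E (x # y # p) \<longleftrightarrow> x \<in> V \<and> E x y \<and> walk V E (y # p)"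
proof
  assume w: "walk V E (x # y # p)"
  have "E x y" using w unfolding walk_def by (metis One_nat_def length_Cons nth_Cons_0 nth_Cons_Suc zero_less_Suc Suc_less_eq)
  moreover have "\<forall>i. Suc i < length (y # p) \<longrightarrow> E ((y # p) ! i) ((y # p) ! Suc i)"
    using w unfolding walk_def by (metis Suc_less_eq length_Cons nth_Cons_Suc)
  ultimately show "x \<in> V \<and> E x y \<and> walk V E (y # p)" using w unfolding walk_def by auto
next
  assume h: "x \<in> V \<and> E x y \<and> walk V E (y # p)"
  show "walk V E (x # y # p)" unfolding walk_def
  proof (intro conjI allI impI)
    show "x # y # p \<noteq> []" by simp
    show "set (x # y # p) \<subseteq> V" using h unfolding walk_def by auto
    fix i assume i: "Suc i < length (x # y # p)"
    show "E ((x # y # p) ! i) ((x # y # p) ! Suc i)"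
    proof (cases i)
      case 0 thus ?thesis using h by simp
    next
      case (Suc j)
      hence "Suc j < length (y # p)" using i by simp
      thus ?thesis using h Suc unfolding walk_def by simp
    qed
  qed
qed

lemma walk_append: "walk V E p \<Longrightarrow> walk V E q \<Longrightarrow> last p = hd q \<Longrightarrow> walk V E (p @ tl q)"
proof (induction p rule: induct_list012)
  case 1 thus ?case by (simp add: walk_def)
next
  case (2 x)
  have "q \<noteq> []" using 2 unfolding walk_def by simp
  hence "[x] @ tl q = q" using 2 by (cases q) auto
  thus ?case using 2 by simp
next
  case (3 x y p)
  have "walk V E ((y # p) @ tl q)" using 3 walk_cons by (metis last_ConsR list.distinct(1))
  thus ?case using 3 walk_cons by (metis append_Cons)
qed

lemma walk_hd_last_append: "q \<noteq> [] \<Longrightarrow> last p = hd q \<Longrightarrow> p \<noteq> [] \<Longrightarrow> hd (p @ tl q) = hd p \<and> last (p @ tl q) = last q"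
  by (cases q) auto

lemma gdist_le: "walk V E p \<Longrightarrow> hd p = u \<Longrightarrow> last p = v \<Longrightarrow> length p \<le> n + 1 \<Longrightarrow> gdist V E u v \<le> enat n"
  unfolding gdist_def by (rule INF_lower2[of p]) auto

context fuchs2
begin

abbreviation "EE \<equiv> cayley_adj G S0"

definition cc :: real where "cc = 2 * real Dc + 1"

lemma cc_pos: "cc > 0" unfolding cc_def by simp

lemma step: "EE g h \<Longrightarrow> g \<in> \<Gamma> \<and> h \<in> \<Gamma> \<and> hdist (g \<i>) (h \<i>) \<le> cc"
proof -
  assume e: "EE g h"
  hence gh: "g \<in> \<Gamma>" "h \<in> \<Gamma>" unfolding cayley_adj_def by auto
  obtain s where s: "s \<in> S0" "h = g \<circ> s \<or> g = h \<circ> s" using e unfolding cayley_adj_def by auto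
  have sG: "s \<in> \<Gamma>" and sb: "hdist \<i> (s \<i>) \<le> cc" using s(1) unfolding S0_def cc_def by auto
  have "hdist (g \<i>) (h \<i>) \<le> cc"
  proof (cases "h = g \<circ> s")
    case True
    thus ?thesis using Gam_hd[OF gh(1) ii_H Gi_H[OF sG]] sb by simp
  next
    case False
    hence "g = h \<circ> s" using s by auto
    thus ?thesis using Gam_hd[OF gh(2) ii_H Gi_H[OF sG]] sb by (simp add: hd_sym)
  qed
  thus ?thesis using gh by simp
qed

lemma word: "g \<in> \<Gamma> \<Longrightarrow> \<exists>n. \<forall>u\<in>\<Gamma>. \<exists>p. walk \<Gamma> EE p \<and> hd p = u \<and> last p = u \<circ> g \<and> length p \<le> n + 1"
proof -
  assume "g \<in> \<Gamma>"
  hence "g \<in> generate G S0" using S0_gen by simp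
  thus ?thesis
  proof (induction g rule: generate.induct)
    case one
    show ?case
      by (rule exI[of _ 0]) (auto intro!: exI[of _ "[_]"] walk_single)
  next
    case (incl s)
    have sG: "s \<in> \<Gamma>" using incl S0_sub by auto
    show ?case
    proof (intro exI[of _ 1] ballI)
      fix u assume u: "u \<in> \<Gamma>"
      have "EE u (u \<circ> s)" unfolding cayley_adj_def using u comp_in[OF u sG] incl by auto
      hence "walk \<Gamma> EE [u, u \<circ> s]" using walk_cons walk_single comp_in[OF u sG] u by metis
      thus "\<exists>p. walk \<Gamma> EE p \<and> hd p = u \<and> last p = u \<circ> s \<and> length p \<le> 1 + 1"
        by (intro exI[of _ "[u, u \<circ> s]"]) auto
    qed
  next
    case (inv s)
    have sG: "s \<in> \<Gamma>" using inv S0_sub by auto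
    have iv: "inv\<^bsub>G\<^esub> s = ginv s" unfolding ginv_def ..
    show ?case
    proof (intro exI[of _ 1] ballI)
      fix u assume u: "u \<in> \<Gamma>"
      have w: "u \<circ> ginv s \<in> \<Gamma>" using comp_in[OF u ginv_in[OF sG]] .
      have "u = (u \<circ> ginv s) \<circ> s" using ginv_l[OF sG] by (simp add: comp_assoc)
      hence "EE u (u \<circ> ginv s)" unfolding cayley_adj_def using u w inv by auto
      hence "walk \<Gamma> EE [u, u \<circ> ginv s]" using walk_cons walk_single w u by metis
      thus "\<exists>p. walk \<Gamma> EE p \<and> hd p = u \<and> last p = u \<circ> inv\<^bsub>G\<^esub> s \<and> length p \<le> 1 + 1"
        unfolding iv by (intro exI[of _ "[u, u \<circ> ginv s]"]) auto
    qed
  next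
    case (eng g1 g2)
    obtain n1 where n1: "\<forall>u\<in>\<Gamma>. \<exists>p. walk \<Gamma> EE p \<and> hd p = u \<and> last p = u \<circ> g1 \<and> length p \<le> n1 + 1"
      using eng.IH(1) by blast
    obtain n2 where n2: "\<forall>u\<in>\<Gamma>. \<exists>p. walk \<Gamma> EE p \<and> hd p = u \<and> last p = u \<circ> g2 \<and> length p \<le> n2 + 1"
      using eng.IH(2) by blast
    have g1G: "g1 \<in> \<Gamma>" using eng.hyps(1) S0_gen by simp
    show ?case
    proof (intro exI[of _ "n1 + n2"] ballI)
      fix u assume u: "u \<in> \<Gamma>"
      obtain p1 where p1: "walk \<Gamma> EE p1" "hd p1 = u" "last p1 = u \<circ> g1" "length p1 \<le> n1 + 1" using n1 u by blast
      obtain p2 where p2: "walk \<Gamma> EE p2" "hd p2 = u \<circ> g1" "last p2 = (u \<circ> g1) \<circ> g2" "length p2 \<le> n2 + 1"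
        using n2 comp_in[OF u g1G] by blast
      have ne: "p1 \<noteq> []" "p2 \<noteq> []" using p1(1) p2(1) unfolding walk_def by auto
      have "walk \<Gamma> EE (p1 @ tl p2)" using walk_append[OF p1(1) p2(1)] p1(3) p2(2) by simp
      moreover have "hd (p1 @ tl p2) = u" "last (p1 @ tl p2) = u \<circ> (g1 \<otimes>\<^bsub>G\<^esub> g2)"
        using walk_hd_last_append[OF ne(2) _ ne(1)] p1 p2 by (auto simp: comp_assoc)
      moreover have "length (p1 @ tl p2) \<le> n1 + n2 + 1" using p1(4) p2(4) ne by simp
      ultimately show "\<exists>p. walk \<Gamma> EE p \<and> hd p = u \<and> last p = u \<circ> (g1 \<otimes>\<^bsub>G\<^esub> g2) \<and> length p \<le> n1 + n2 + 1"
        by blast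
    qed
  qed
qed

end

lemma far_axis:
  assumes "Im z > 0" "Im w > 0" "Re z * Re w \<le> 0" "a \<ge> 0" "cosh a \<le> cmod z / Im z"
  shows "hdist z w \<ge> a"
proof (rule ccontr)
  assume "\<not> hdist z w \<ge> a"
  hence "cd z w < cosh a" using hd_less_iff[OF assms(1,2,4)] by simp
  thus False using cd_ge_axis[OF assms(1-3)] assms(5) by simp
qed

context fuchs2
begin

lemma chain:
  assumes "walk \<Gamma> EE p" "b < length p"
  shows "\<bar>ln (cmod ((p ! b) \<i>)) - ln (cmod ((p ! 0) \<i>))\<bar> \<le> real b * cc"
  using assms(2)
proof (induction b)
  case 0 thus ?case by simp
next
  case (Suc b)
  have e: "EE (p ! b) (p ! Suc b)" using assms(1) Suc.prems unfolding walk_def by auto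
  have st: "p ! b \<in> \<Gamma>" "p ! Suc b \<in> \<Gamma>" "hdist ((p ! b) \<i>) ((p ! Suc b) \<i>) \<le> cc" using step[OF e] by auto
  have "\<bar>ln (cmod ((p ! Suc b) \<i>)) - ln (cmod ((p ! b) \<i>))\<bar> \<le> cc"
    using log_lip[OF Gi_H[OF st(2)] Gi_H[OF st(1)]] st(3) hd_sym by (metis order_trans)
  moreover have "\<bar>ln (cmod ((p ! b) \<i>)) - ln (cmod ((p ! 0) \<i>))\<bar> \<le> real b * cc" using Suc by simp
  ultimately show ?case by (simp add: algebra_simps)
qed

definition Fset :: "nat \<Rightarrow> (complex \<Rightarrow> complex) set" where
  "Fset L = {g \<in> \<Gamma>. \<exists>t. \<bar>t\<bar> \<le> real L \<and> hdist (g \<i>) (pt t 0) \<le> cc}"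

lemma walk_cross:
  assumes w: "walk \<Gamma> EE p" and h: "Re ((hd p) \<i>) > 0" and l: "Re ((last p) \<i>) < 0"
    and F: "set p \<inter> Fset L = {}"
  shows "real L < \<bar>ln (cmod ((hd p) \<i>))\<bar> + real (length p - 1) * cc"
proof -
  have ne: "p \<noteq> []" using w unfolding walk_def by simp
  have pG: "set p \<subseteq> \<Gamma>" using w unfolding walk_def by simp
  define P where "P = (\<lambda>a. a + 1 < length p \<and> Re ((p ! (a + 1)) \<i>) \<le> 0)"
  have len2: "length p \<ge> 2"
  proof (rule ccontr)
    assume "\<not> length p \<ge> 2"
    moreover have "length p \<noteq> 0" using ne by simp
    ultimately have "length p = 1" by linarith
    hence "hd p = last p" by (cases p) auto
    thus False using h l by simp
  qed
  have "P (length p - 2)" unfolding P_def using len2 l last_conv_nth[OF ne]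
    by (simp add: Suc_diff_Suc numeral_2_eq_2)
  define a where "a = (LEAST a. P a)"
  have Pa: "P a" unfolding a_def by (rule LeastI) fact
  have Ra: "Re ((p ! a) \<i>) > 0"
  proof (cases a)
    case 0 thus ?thesis using h hd_conv_nth[OF ne] by simp
  next
    case (Suc a1)
    have "\<not> P a1" using not_less_Least[of a1 P] unfolding a_def[symmetric] Suc by simp
    thus ?thesis using Pa Suc unfolding P_def by auto
  qed
  have al: "a + 1 < length p" using Pa unfolding P_def by simp
  have e: "EE (p ! a) (p ! (a + 1))" using w al unfolding walk_def by auto
  have st: "p ! a \<in> \<Gamma>" "p ! (a + 1) \<in> \<Gamma>" "hdist ((p ! a) \<i>) ((p ! (a + 1)) \<i>) \<le> cc" using step[OF e] by auto
  define z where "z = (p ! a) \<i>"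
  have z: "Im z > 0" unfolding z_def using Gi_H[OF st(1)] .
  have cz: "cmod z > 0" using z by (auto simp: zero_less_norm_iff)
  have "Re z * Re ((p ! (a + 1)) \<i>) \<le> 0"
    using Pa Ra unfolding P_def z_def by (simp add: mult_nonneg_nonpos)
  hence "cd z (\<i> * of_real (cmod z)) \<le> cd z ((p ! (a + 1)) \<i>)"
    using cd_ge_axis[OF z Gi_H[OF st(2)]] cd_axis_point[OF z] by simp
  moreover have "Im (\<i> * of_real (cmod z)) > 0" using cz by simp
  ultimately have "hdist z (\<i> * of_real (cmod z)) \<le> cc"
    using st(3) hd_le_iff[OF z] hd_le_iff[OF z Gi_H[OF st(2)]] cc_pos unfolding z_def
    by (smt (verit, ccfv_SIG) z_def)
  moreover have "\<i> * of_real (cmod z) = pt (ln (cmod z)) 0" using pt_axis cz by simp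
  ultimately have "hdist z (pt (ln (cmod z)) 0) \<le> cc" by simp
  moreover have "p ! a \<notin> Fset L" using F al by (metis disjoint_iff nth_mem less_imp_le Suc_lessD Suc_eq_plus1)
  ultimately have big: "\<bar>ln (cmod z)\<bar> > real L" using st(1) unfolding Fset_def z_def by force
  have ch: "\<bar>ln (cmod z) - ln (cmod ((p ! 0) \<i>))\<bar> \<le> real a * cc"
    unfolding z_def using chain[OF w] al by simp
  have "real a \<le> real (length p - 1)" using al by simp
  hence "real a * cc \<le> real (length p - 1) * cc" using cc_pos by (simp add: mult_right_mono)
  thus ?thesis using big ch hd_conv_nth[OF ne] by simp
qed

end

context fuchs2
begin

definition cn :: nat where "cn = 2 * Dc + 1"
lemma cc_cn: "cc = real cn" unfolding cc_def cn_def by simp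

definition BallR where "BallR R = {g \<in> \<Gamma>. hdist \<i> (g \<i>) \<le> R}"
definition NN where "NN = card (BallR (cc + 1 + real Dc))"

lemma NN_pos: "NN > 0"
proof -
  have "id \<in> BallR (cc + 1 + real Dc)" unfolding BallR_def using cc_pos by (simp add: hd_refl)
  thus ?thesis unfolding NN_def BallR_def using fin_ball by (metis card_gt_0_iff empty_iff)
qed

definition sq :: "nat \<Rightarrow> real" where "sq q = real Dc + cc + 1 + real q * cc"
definition ptU where "ptU i = pt (of_int (fst i) * cc) (sq (snd i))"
definition ptO where "ptO i = pt (of_int (fst i) * cc) (- sq (snd i))"
definition uu where "uu i = (SOME g. g \<in> \<Gamma> \<and> hdist (ptU i) (g \<i>) < real Dc)"
definition vv where "vv i = (SOME g. g \<in> \<Gamma> \<and> hdist (ptO i) (g \<i>) < real Dc)"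

lemma sq_ge: "sq q \<ge> real Dc + cc + 1" unfolding sq_def using cc_pos by simp
lemma sq_pos: "sq q > 0" using sq_ge[of q] cc_pos by linarith

lemma ptU_H: "Im (ptU i) > 0" unfolding ptU_def by (rule pt_Im)
lemma ptO_H: "Im (ptO i) > 0" unfolding ptO_def by (rule pt_Im)

lemma uu_prop: "uu i \<in> \<Gamma> \<and> hdist (ptU i) (uu i \<i>) < real Dc"
proof -
  have "\<exists>g. g \<in> \<Gamma> \<and> hdist (ptU i) (g \<i>) < real Dc" using Dc_prop[OF ptU_H] by blast
  thus ?thesis unfolding uu_def by (rule someI_ex)
qed
lemma vv_prop: "vv i \<in> \<Gamma> \<and> hdist (ptO i) (vv i \<i>) < real Dc"
proof -
  have "\<exists>g. g \<in> \<Gamma> \<and> hdist (ptO i) (g \<i>) < real Dc" using Dc_prop[OF ptO_H] by blast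
  thus ?thesis unfolding vv_def by (rule someI_ex)
qed

lemma sep_gen:
  fixes \<sigma> :: real
  assumes "i \<noteq> i'" and that: "\<bar>\<sigma>\<bar> = 1"
  shows "hdist (pt (of_int (fst i) * cc) (\<sigma> * sq (snd i))) (pt (of_int (fst i') * cc) (\<sigma> * sq (snd i'))) \<ge> cc"
proof (cases "fst i = fst i'")
  case False
  have "\<bar>ln (cmod (pt (of_int (fst i) * cc) (\<sigma> * sq (snd i)))) - ln (cmod (pt (of_int (fst i') * cc) (\<sigma> * sq (snd i'))))\<bar>
     = \<bar>of_int (fst i) - of_int (fst i')\<bar> * cc"
    unfolding pt_norm using cc_pos by (simp add: left_diff_distrib[symmetric] abs_mult)
  also have "\<dots> \<ge> 1 * cc"
  proof -
    have "\<bar>of_int (fst i) - of_int (fst i') :: real\<bar> \<ge> 1" using False by linarith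
    thus ?thesis using cc_pos by (intro mult_right_mono) auto
  qed
  finally show ?thesis using log_lip[OF pt_Im pt_Im] by (metis mult_1 order_trans)
next
  case True
  hence "snd i \<noteq> snd i'" using assms by (metis prod.expand)
  hence q: "\<bar>real (snd i) - real (snd i')\<bar> \<ge> 1" by linarith
  have "hdist (pt (of_int (fst i) * cc) (\<sigma> * sq (snd i))) (pt (of_int (fst i') * cc) (\<sigma> * sq (snd i')))
     = \<bar>\<sigma> * sq (snd i) - \<sigma> * sq (snd i')\<bar>" using True hd_pt by simp
  also have "\<dots> = \<bar>real (snd i) - real (snd i')\<bar> * cc"
    using that cc_pos unfolding sq_def by (simp add: abs_mult right_diff_distrib[symmetric] left_diff_distrib[symmetric])
  also have "\<dots> \<ge> 1 * cc" using q cc_pos by (intro mult_right_mono) auto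
  finally show ?thesis by simp
qed

lemma sepU: "i \<noteq> i' \<Longrightarrow> hdist (ptU i) (ptU i') \<ge> cc"
  using sep_gen[of i i' 1] unfolding ptU_def by simp
lemma sepO: "i \<noteq> i' \<Longrightarrow> hdist (ptO i) (ptO i') \<ge> cc"
  using sep_gen[of i i' "-1"] unfolding ptO_def by simp

lemma inj_gen:
  assumes sep: "\<And>i i'. i \<noteq> i' \<Longrightarrow> hdist (P i) (P i') \<ge> cc"
    and pr: "\<And>i. w i \<in> \<Gamma> \<and> hdist (P i) (w i \<i>) < real Dc" and H: "\<And>i. Im (P i) > 0"
  shows "inj w"
proof (rule injI, rule ccontr)
  fix i i' assume eq: "w i = w i'" and ne: "i \<noteq> i'"
  have "hdist (P i) (P i') \<le> hdist (P i) (w i \<i>) + hdist (w i \<i>) (P i')"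
    using hd_triangle[OF H Gi_H H] pr by blast
  also have "\<dots> < 2 * real Dc" using pr[of i] pr[of i'] eq by (simp add: hd_sym)
  finally show False using sep[OF ne] unfolding cc_def by simp
qed

lemma inj_uu: "inj uu" using inj_gen[OF sepU uu_prop ptU_H] .
lemma inj_vv: "inj vv" using inj_gen[OF sepO vv_prop ptO_H] .

lemma ratioU: "cmod (ptU i) / Im (ptU i) = cosh (sq (snd i))" unfolding ptU_def by (rule pt_ratio)
lemma ratioO: "cmod (ptO i) / Im (ptO i) = cosh (sq (snd i))" unfolding ptO_def using pt_ratio by simp

lemma ReU: "Re (ptU i) > 0" unfolding ptU_def pt_Re using sq_pos cosh_pos by simp
lemma ReO: "Re (ptO i) < 0" unfolding ptO_def pt_Re using sq_pos cosh_pos by (simp add: mult_pos_neg)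

lemma sign_uu: "Re (uu i \<i>) > 0"
proof (rule ccontr)
  assume "\<not> Re (uu i \<i>) > 0"
  hence "Re (ptU i) * Re (uu i \<i>) \<le> 0" using ReU[of i] by (simp add: mult_nonneg_nonpos)
  hence "hdist (ptU i) (uu i \<i>) \<ge> sq (snd i)"
    using far_axis[OF ptU_H Gi_H] uu_prop[of i] ratioU[of i] sq_pos[of "snd i"] by simp
  thus False using uu_prop[of i] sq_ge[of "snd i"] cc_pos by linarith
qed

lemma sign_vv: "Re (vv i \<i>) < 0"
proof (rule ccontr)
  assume "\<not> Re (vv i \<i>) < 0"
  hence "Re (ptO i) * Re (vv i \<i>) \<le> 0" using ReO[of i] by (simp add: mult_nonpos_nonneg)
  hence "hdist (ptO i) (vv i \<i>) \<ge> sq (snd i)"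
    using far_axis[OF ptO_H Gi_H] vv_prop[of i] ratioO[of i] sq_pos[of "snd i"] by simp
  thus False using vv_prop[of i] sq_ge[of "snd i"] cc_pos by linarith
qed

lemma notF_gen:
  assumes pr: "w \<in> \<Gamma> \<and> hdist P (w \<i>) < real Dc" and H: "Im P > 0"
    and ra: "cmod P / Im P = cosh (sq q)"
  shows "w \<notin> Fset L"
proof
  assume "w \<in> Fset L"
  then obtain t where t: "hdist (w \<i>) (pt t 0) \<le> cc" unfolding Fset_def by auto
  have "hdist P (pt t 0) \<le> hdist P (w \<i>) + hdist (w \<i>) (pt t 0)"
    using hd_triangle[OF H Gi_H pt_Im] pr by blast
  also have "\<dots> < real Dc + cc" using pr t by simp
  finally have lt: "hdist P (pt t 0) < real Dc + cc" .
  have "Re P * Re (pt t 0) \<le> 0" unfolding pt_Re by simp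
  hence "hdist P (pt t 0) \<ge> sq q" using far_axis[OF H pt_Im] ra sq_pos[of q] by simp
  thus False using lt sq_ge[of q] by linarith
qed

lemma uu_notF: "uu i \<notin> Fset L" using notF_gen[OF uu_prop ptU_H ratioU] .
lemma vv_notF: "vv i \<notin> Fset L" using notF_gen[OF vv_prop ptO_H ratioO] .

lemma loglen: "\<bar>ln (cmod (uu i \<i>))\<bar> \<le> \<bar>of_int (fst i)\<bar> * cc + real Dc"
proof -
  have "\<bar>ln (cmod (ptU i)) - ln (cmod (uu i \<i>))\<bar> \<le> hdist (ptU i) (uu i \<i>)"
    using log_lip[OF ptU_H Gi_H] uu_prop by blast
  moreover have "ln (cmod (ptU i)) = of_int (fst i) * cc" unfolding ptU_def pt_norm by simp
  moreover have "\<bar>of_int (fst i) * cc\<bar> = \<bar>of_int (fst i)\<bar> * cc" using cc_pos by (simp add: abs_mult)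
  ultimately show ?thesis using uu_prop[of i] by linarith
qed

lemma uv_close: "hdist (uu i \<i>) (vv i \<i>) \<le> 2 * real Dc + 2 * sq (snd i)"
proof -
  have "hdist (uu i \<i>) (vv i \<i>) \<le> hdist (uu i \<i>) (ptU i) + hdist (ptU i) (vv i \<i>)"
    using hd_triangle[OF Gi_H ptU_H Gi_H] uu_prop vv_prop by blast
  also have "hdist (ptU i) (vv i \<i>) \<le> hdist (ptU i) (ptO i) + hdist (ptO i) (vv i \<i>)"
    using hd_triangle[OF ptU_H ptO_H Gi_H] vv_prop by blast
  also have "hdist (ptU i) (ptO i) = 2 * sq (snd i)" unfolding ptU_def ptO_def hd_pt using sq_pos[of "snd i"] by simp
  finally show ?thesis using uu_prop[of i] vv_prop[of i] by (simp add: hd_sym)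
qed

lemma Fcard: "finite (Fset L) \<and> card (Fset L) \<le> (2 * L + 1) * NN"
proof -
  define Fn where "Fn = (\<lambda>n::int. {g \<in> \<Gamma>. hdist (g \<i>) (pt (of_int n) 0) \<le> cc + 1})"
  have sub: "Fset L \<subseteq> (\<Union>n\<in>{-int L..int L}. Fn n)"
  proof
    fix g assume "g \<in> Fset L"
    then obtain t where g: "g \<in> \<Gamma>" "\<bar>t\<bar> \<le> real L" "hdist (g \<i>) (pt t 0) \<le> cc" unfolding Fset_def by auto
    define n where "n = \<lfloor>t\<rfloor>"
    have n: "n \<in> {-int L..int L}" unfolding n_def using g(2) by (auto simp: le_floor_iff floor_le_iff)
    have "hdist (pt t 0) (pt (of_int n) 0) \<le> 1" unfolding hd_axis n_def by linarith
    hence "hdist (g \<i>) (pt (of_int n) 0) \<le> cc + 1"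
      using hd_triangle[OF Gi_H[OF g(1)] pt_Im pt_Im, of "of_int n" 0 t 0] g(3) by linarith
    thus "g \<in> (\<Union>n\<in>{-int L..int L}. Fn n)" using n g(1) unfolding Fn_def by auto
  qed
  have fb: "finite (BallR (cc + 1 + real Dc))" unfolding BallR_def by (rule fin_ball)
  have cFn: "finite (Fn n) \<and> card (Fn n) \<le> NN" for n
  proof -
    obtain h where h: "h \<in> \<Gamma>" "hdist (pt (of_int n) 0) (h \<i>) < real Dc" using Dc_prop[OF pt_Im] by blast
    have "Fn n \<subseteq> (\<lambda>x. h \<circ> x) ` BallR (cc + 1 + real Dc)"
    proof
      fix g assume "g \<in> Fn n"
      hence g: "g \<in> \<Gamma>" "hdist (g \<i>) (pt (of_int n) 0) \<le> cc + 1" unfolding Fn_def by auto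
      define x where "x = ginv h \<circ> g"
      have xG: "x \<in> \<Gamma>" unfolding x_def using comp_in[OF ginv_in[OF h(1)] g(1)] .
      have "hdist \<i> (x \<i>) = hdist (h \<i>) (g \<i>)" unfolding x_def using hd_translate[OF h(1) g(1)] .
      also have "\<dots> \<le> hdist (h \<i>) (pt (of_int n) 0) + hdist (pt (of_int n) 0) (g \<i>)"
        using hd_triangle[OF Gi_H[OF h(1)] pt_Im Gi_H[OF g(1)]] .
      also have "\<dots> \<le> cc + 1 + real Dc" using h(2) g(2) by (simp add: hd_sym)
      finally have "x \<in> BallR (cc + 1 + real Dc)" unfolding BallR_def using xG by simp
      moreover have "h \<circ> x = g" unfolding x_def using ginv_r[OF h(1)] by (simp add: comp_assoc[symmetric])
      ultimately show "g \<in> (\<lambda>x. h \<circ> x) ` BallR (cc + 1 + real Dc)" by force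
    qed
    moreover have "card ((\<lambda>x. h \<circ> x) ` BallR (cc + 1 + real Dc)) \<le> NN"
      unfolding NN_def using card_image_le[OF fb] .
    ultimately show ?thesis using fb by (meson card_mono finite_imageI finite_subset order_trans)
  qed
  have fin: "finite (\<Union>n\<in>{-int L..int L}. Fn n)" using cFn by auto
  have "card (Fset L) \<le> card (\<Union>n\<in>{-int L..int L}. Fn n)" using card_mono[OF fin sub] .
  also have "\<dots> \<le> (\<Sum>n\<in>{-int L..int L}. card (Fn n))" by (rule card_UN_le) simp
  also have "\<dots> \<le> card {-int L..int L} * NN" using sum_bounded_above[of "{-int L..int L}" "\<lambda>n. card (Fn n)" NN] cFn by simp
  also have "card {-int L..int L} = 2 * L + 1" by simp
  finally show ?thesis using finite_subset[OF sub fin] by simp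
qed

end

context fuchs2
begin

lemma sq_mono: "q \<le> q' \<Longrightarrow> sq q \<le> sq q'"
  unfolding sq_def using cc_pos by (simp add: mult_right_mono)

lemma extra: "extraterrestrial_graph \<Gamma> EE"
  unfolding extraterrestrial_graph_def
proof (intro allI)
  fix m :: nat
  define M where "M = (m + 1) * NN * (cn + 1)"
  define R0 where "R0 = 2 * real Dc + 2 * sq M"
  define Phi where "Phi = BallR R0"
  have finPhi: "finite Phi" unfolding Phi_def BallR_def by (rule fin_ball)
  define nf where "nf = (\<lambda>g. SOME n. \<forall>u\<in>\<Gamma>. \<exists>p. walk \<Gamma> EE p \<and> hd p = u \<and> last p = u \<circ> g \<and> length p \<le> n + 1)"
  have nf: "\<forall>u\<in>\<Gamma>. \<exists>p. walk \<Gamma> EE p \<and> hd p = u \<and> last p = u \<circ> g \<and> length p \<le> nf g + 1" if "g \<in> \<Gamma>" for g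
    unfolding nf_def by (rule someI_ex) (rule word[OF that])
  define k where "k = Max (insert 0 (nf ` Phi))"
  have nfk: "nf g \<le> k" if "g \<in> Phi" for g unfolding k_def using finPhi that by simp
  have Mpos: "M > 0" unfolding M_def using NN_pos by simp
  show "\<exists>k. \<forall>r. \<exists>U F Ou \<mu>. U \<subseteq> \<Gamma> \<and> F \<subseteq> \<Gamma> \<and> Ou \<subseteq> \<Gamma> \<and> finite U \<and> finite F \<and> finite Ou \<and>
       U \<inter> F = {} \<and> U \<inter> Ou = {} \<and> F \<inter> Ou = {} \<and> U \<noteq> {} \<and> m * card F \<le> card U \<and>
       bij_betw \<mu> U Ou \<and> (\<forall>u\<in>U. gdist \<Gamma> EE u (\<mu> u) \<le> enat k) \<and>
       (\<forall>p. walk \<Gamma> EE p \<and> hd p \<in> U \<and> last p \<in> Ou \<longrightarrow> set p \<inter> F \<noteq> {} \<or> r \<le> length p - 1)"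
  proof (intro exI[of _ k] allI)
    fix r :: nat
    define J where "J = Dc + cn * r + 3"
    define L where "L = J * cn + Dc + cn * r + 1"
    define I where "I = {- int J..int J} \<times> {0..<M}"
    define U where "U = uu ` I"
    define Ou where "Ou = vv ` I"
    define F where "F = Fset L"
    define \<mu> where "\<mu> = vv \<circ> the_inv_into I uu"
    have finI: "finite I" unfolding I_def by simp
    have injU: "inj_on uu I" by (rule inj_on_subset[OF inj_uu]) simp
    have injO: "inj_on vv I" by (rule inj_on_subset[OF inj_vv]) simp
    have c1: "U \<subseteq> \<Gamma>" unfolding U_def using uu_prop by auto
    have c2: "F \<subseteq> \<Gamma>" unfolding F_def Fset_def by auto
    have c3: "Ou \<subseteq> \<Gamma>" unfolding Ou_def using vv_prop by auto
    have c4: "finite U" "finite Ou" unfolding U_def Ou_def using finI by auto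
    have c5: "finite F" unfolding F_def using Fcard by simp
    have c6: "U \<inter> F = {}" unfolding U_def F_def using uu_notF by auto
    have c7: "U \<inter> Ou = {}"
    proof (rule ccontr)
      assume "U \<inter> Ou \<noteq> {}"
      then obtain i i' where "uu i = vv i'" unfolding U_def Ou_def by blast
      thus False using sign_uu[of i] sign_vv[of i'] by simp
    qed
    have c8: "F \<inter> Ou = {}" unfolding Ou_def F_def using vv_notF by auto
    have c9: "U \<noteq> {}" unfolding U_def I_def using Mpos by auto
    have c10: "m * card F \<le> card U"
    proof -
      have cU: "card U = (2 * J + 1) * M" unfolding U_def I_def
        using card_image[OF injU] unfolding I_def by (simp add: card_cartesian_product nat_add_distrib nat_mult_distrib algebra_simps)
      have cF: "card F \<le> (2 * L + 1) * NN" unfolding F_def using Fcard by simp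
      have a1: "2 * L + 1 = 2 * (J * cn) + 2 * Dc + 2 * (cn * r) + 3" unfolding L_def by simp
      have a2: "(2 * J + 1) * (cn + 1) = 2 * (J * cn) + 2 * J + cn + 1" by (simp add: algebra_simps)
      have a3: "2 * J = 2 * Dc + 2 * (cn * r) + 6" unfolding J_def by simp
      have le: "2 * L + 1 \<le> (2 * J + 1) * (cn + 1)" using a1 a2 a3 by linarith
      have "m * card F \<le> m * ((2 * L + 1) * NN)" using cF by simp
      also have "\<dots> \<le> (m + 1) * ((2 * L + 1) * NN)" by simp
      also have "\<dots> \<le> (m + 1) * (((2 * J + 1) * (cn + 1)) * NN)" using le by (intro mult_le_mono2 mult_le_mono1)
      also have "\<dots> = (2 * J + 1) * M" unfolding M_def by (simp add: algebra_simps)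
      finally show ?thesis using cU by simp
    qed
    have c11: "bij_betw \<mu> U Ou"
    proof -
      have "bij_betw (the_inv_into I uu) U I" unfolding U_def
        by (rule bij_betw_the_inv_into) (rule inj_on_imp_bij_betw[OF injU])
      moreover have "bij_betw vv I Ou" unfolding Ou_def by (rule inj_on_imp_bij_betw[OF injO])
      ultimately show ?thesis unfolding \<mu>_def by (rule bij_betw_trans)
    qed
    have c12: "\<forall>u\<in>U. gdist \<Gamma> EE u (\<mu> u) \<le> enat k"
    proof
      fix x assume "x \<in> U"
      then obtain i where i: "i \<in> I" "x = uu i" unfolding U_def by auto
      have mx: "\<mu> x = vv i" unfolding \<mu>_def i(2) using the_inv_into_f_f[OF injU i(1)] by simp
      have uG: "uu i \<in> \<Gamma>" and vG: "vv i \<in> \<Gamma>" using uu_prop vv_prop by auto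
      define g where "g = ginv (uu i) \<circ> vv i"
      have gG: "g \<in> \<Gamma>" unfolding g_def using comp_in[OF ginv_in[OF uG] vG] .
      have "hdist \<i> (g \<i>) = hdist (uu i \<i>) (vv i \<i>)" unfolding g_def using hd_translate[OF uG vG] .
      also have "\<dots> \<le> 2 * real Dc + 2 * sq (snd i)" by (rule uv_close)
      also have "\<dots> \<le> R0" unfolding R0_def using sq_mono[of "snd i" M] i(1) unfolding I_def by auto
      finally have "g \<in> Phi" unfolding Phi_def BallR_def using gG by simp
      hence nk: "nf g \<le> k" by (rule nfk)
      obtain p where p: "walk \<Gamma> EE p" "hd p = uu i" "last p = uu i \<circ> g" "length p \<le> nf g + 1"
        using nf[OF gG] uG by blast
      have "uu i \<circ> g = vv i" unfolding g_def using ginv_r[OF uG] by (simp add: comp_assoc[symmetric])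
      hence "gdist \<Gamma> EE (uu i) (vv i) \<le> enat k" using gdist_le[OF p(1,2)] p(3,4) nk by simp
      thus "gdist \<Gamma> EE x (\<mu> x) \<le> enat k" using i mx by simp
    qed
    have c13: "\<forall>p. walk \<Gamma> EE p \<and> hd p \<in> U \<and> last p \<in> Ou \<longrightarrow> set p \<inter> F \<noteq> {} \<or> r \<le> length p - 1"
    proof (intro allI impI)
      fix p assume p: "walk \<Gamma> EE p \<and> hd p \<in> U \<and> last p \<in> Ou"
      show "set p \<inter> F \<noteq> {} \<or> r \<le> length p - 1"
      proof (rule disjCI)
        assume "\<not> r \<le> length p - 1"
        hence rl: "real (length p - 1) < real r" by simp
        show "set p \<inter> F \<noteq> {}"
        proof
          assume disj: "set p \<inter> F = {}"
          obtain i where i: "i \<in> I" "hd p = uu i" using p unfolding U_def by auto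
          obtain i' where i': "last p = vv i'" using p unfolding Ou_def by auto
          have cr: "real L < \<bar>ln (cmod ((hd p) \<i>))\<bar> + real (length p - 1) * cc"
            using walk_cross[of p L] p disj sign_uu[of i] sign_vv[of i'] i i' unfolding F_def by simp
          have "\<bar>of_int (fst i)\<bar> \<le> real J" using i(1) unfolding I_def by auto
          hence "\<bar>of_int (fst i)\<bar> * cc \<le> real J * cc" using cc_pos by (simp add: mult_right_mono)
          hence "\<bar>ln (cmod ((hd p) \<i>))\<bar> \<le> real J * cc + real Dc" using loglen[of i] i(2) by simp
          moreover have "real L = real J * cc + real Dc + cc * real r + 1" unfolding L_def cc_cn by simp
          ultimately have "cc * real r < real (length p - 1) * cc" using cr by linarith
          hence "real r < real (length p - 1)" using cc_pos by (simp add: mult.commute)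
          thus False using rl by simp
        qed
      qed
    qed
    show "\<exists>U F Ou \<mu>. U \<subseteq> \<Gamma> \<and> F \<subseteq> \<Gamma> \<and> Ou \<subseteq> \<Gamma> \<and> finite U \<and> finite F \<and> finite Ou \<and>
       U \<inter> F = {} \<and> U \<inter> Ou = {} \<and> F \<inter> Ou = {} \<and> U \<noteq> {} \<and> m * card F \<le> card U \<and>
       bij_betw \<mu> U Ou \<and> (\<forall>u\<in>U. gdist \<Gamma> EE u (\<mu> u) \<le> enat k) \<and>
       (\<forall>p. walk \<Gamma> EE p \<and> hd p \<in> U \<and> last p \<in> Ou \<longrightarrow> set p \<inter> F \<noteq> {} \<or> r \<le> length p - 1)"
      using c1 c2 c3 c4 c5 c6 c7 c8 c9 c10 c11 c12 c13 by blast
  qed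
qed

lemma main: "extraterrestrial_group G"
  unfolding extraterrestrial_group_def
proof (intro exI[of _ S0] conjI)
  show "finite S0" by (rule S0_fin)
  show "S0 \<subseteq> carrier G" using S0_sub by simp
  show "\<forall>s\<in>S0. inv\<^bsub>G\<^esub> s \<in> S0" using S0_inv unfolding ginv_def by simp
  show "generate G S0 = carrier G" using S0_gen by simp
  show "extraterrestrial_graph (carrier G) EE" using extra by simp
qed

end

theorem mainTheorem17:
  fixes \<Gamma> :: "(complex \<Rightarrow> complex) set"
  assumes "fuchsian \<Gamma>" and "cocompact \<Gamma>"
  shows "extraterrestrial_group (psl_group\<lparr>carrier := \<Gamma>\<rparr>)"
proof -
  have "fuchs2 \<Gamma>" unfolding fuchs2_def fuchs2_axioms_def fuchs_def using assms fuchsian_def by auto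
  then interpret fuchs2 \<Gamma> .
  show ?thesis by (rule main)
qed

end
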